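(* Under the hypotheses of Theorem 1 (DMC $P_{Y|X}$ with finite alphabets, $C>0$, a capacity-achieving input distribution with full support, $B<\infty$, and $\rho_N>0$ with $\rho_N\to0$ and $\rho_N\sqrt N\to\infty$), the optimal moderate deviations constant satisfies $E^*\le B/C$.
   Context: $C=\max_{P_X}I(X;Y)$, $B=\max_{x,x'}D(P_{Y|X}(\cdot|x)\|P_{Y|X}(\cdot|x'))$. An $(M,N)$-VLF code: uniform message $W$ on $\{1,\dots,M\}$, encoders $X_n=f_n(W,Y^{n-1})$ with $Y_n\sim P_{Y|X}(\cdot|X_n)$ given the past, decoders $g_n:\mathcal{Y}^n\to\{1,\dots,M\}$, and a stopping time $\tau$ of $\{\sigma(Y^n)\}$ with $\mathbb{E}\tau\le N$; $\hat W=g_\tau(Y^\tau)$, $\mathsf{P}_{\mathrm e}(R_N,N)=\mathbb{P}(\hat W\neq W)$, $R_N=\frac1N\ln M_N$. $E^*$ is the supremum of all $E\ge0$ for which there is a family of $(M_N,N)$-VLF codes with $R_N\ge C-\rho_N$, $\mathsf{P}_{\mathrm e}(R_N,N)\to0$ and $\liminf_N -\ln\mathsf{P}_{\mathrm e}(R_N,N)/(N\rho_N)\ge E$. *)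

theory Defs
  imports Complex_Main "HOL-Library.Extended_Real" "HOL-Library.Liminf_Limsup"
begin

text \<open>A DMC with finite input type 'x and finite output type 'y is a stochastic
  matrix W, W x y = P_{Y|X}(y|x).\<close>

definition stoch_matrix :: "('x::finite \<Rightarrow> 'y::finite \<Rightarrow> real) \<Rightarrow> bool" where
  "stoch_matrix W \<longleftrightarrow> (\<forall>x y. 0 \<le> W x y) \<and> (\<forall>x. (\<Sum>y\<in>UNIV. W x y) = 1)"

definition input_dists :: "('x::finite \<Rightarrow> real) set" where
  "input_dists = {P. (\<forall>x. 0 \<le> P x) \<and> (\<Sum>x\<in>UNIV. P x) = 1}"

definition out_dist :: "('x::finite \<Rightarrow> real) \<Rightarrow> ('x \<Rightarrow> 'y \<Rightarrow> real) \<Rightarrow> 'y \<Rightarrow> real" where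
  "out_dist P W y = (\<Sum>x\<in>UNIV. P x * W x y)"

text \<open>Mutual information I(X;Y) in nats (terms with P x * W x y = 0 vanish).\<close>
definition mutual_info :: "('x::finite \<Rightarrow> real) \<Rightarrow> ('x \<Rightarrow> 'y::finite \<Rightarrow> real) \<Rightarrow> real" where
  "mutual_info P W = (\<Sum>x\<in>UNIV. \<Sum>y\<in>UNIV. P x * W x y * ln (W x y / out_dist P W y))"

definition capacity :: "('x::finite \<Rightarrow> 'y::finite \<Rightarrow> real) \<Rightarrow> real" where
  "capacity W = (SUP P\<in>input_dists. mutual_info P W)"

definition kl_div :: "('y::finite \<Rightarrow> real) \<Rightarrow> ('y \<Rightarrow> real) \<Rightarrow> ereal" where
  "kl_div p q = (if \<exists>y. 0 < p y \<and> q y = 0 then \<infinity>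
                 else ereal (\<Sum>y\<in>UNIV. p y * ln (p y / q y)))"

definition max_kl :: "('x::finite \<Rightarrow> 'y::finite \<Rightarrow> real) \<Rightarrow> ereal" where
  "max_kl W = Max {kl_div (W x) (W x') | x x'. True}"

text \<open>A VLF code with M messages (message set {1..M}) is given by
  an encoder enc w ys = f_n(w, y^{n-1}) where n - 1 = length ys,
  a decoder dec ys = g_n(y^n) where n = length ys,
  and a stopping rule stop: tau = least n with stop (y^n).\<close>

definition path_prob ::
  "('x \<Rightarrow> 'y \<Rightarrow> real) \<Rightarrow> (nat \<Rightarrow> 'y list \<Rightarrow> 'x) \<Rightarrow> nat \<Rightarrow> 'y list \<Rightarrow> real" where
  "path_prob W enc w ys = (\<Prod>i<length ys. W (enc w (take i ys)) (ys ! i))"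

definition stops_at :: "('y list \<Rightarrow> bool) \<Rightarrow> 'y list \<Rightarrow> bool" where
  "stops_at stop ys \<longleftrightarrow> stop ys \<and> (\<forall>k<length ys. \<not> stop (take k ys))"

definition stop_prob ::
  "('x \<Rightarrow> 'y::finite \<Rightarrow> real) \<Rightarrow> nat \<Rightarrow> (nat \<Rightarrow> 'y list \<Rightarrow> 'x) \<Rightarrow> ('y list \<Rightarrow> bool) \<Rightarrow> nat \<Rightarrow> real" where
  "stop_prob W M enc stop n =
     (\<Sum>w\<in>{1..M}. \<Sum>ys\<in>{ys::'y list. length ys = n}.
        (if stops_at stop ys then path_prob W enc w ys / real M else 0))"

definition err_prob_at ::
  "('x \<Rightarrow> 'y::finite \<Rightarrow> real) \<Rightarrow> nat \<Rightarrow> (nat \<Rightarrow> 'y list \<Rightarrow> 'x) \<Rightarrow> ('y list \<Rightarrow> nat)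
     \<Rightarrow> ('y list \<Rightarrow> bool) \<Rightarrow> nat \<Rightarrow> real" where
  "err_prob_at W M enc dec stop n =
     (\<Sum>w\<in>{1..M}. \<Sum>ys\<in>{ys::'y list. length ys = n}.
        (if stops_at stop ys \<and> dec ys \<noteq> w then path_prob W enc w ys / real M else 0))"

definition err_prob ::
  "('x \<Rightarrow> 'y::finite \<Rightarrow> real) \<Rightarrow> nat \<Rightarrow> (nat \<Rightarrow> 'y list \<Rightarrow> 'x) \<Rightarrow> ('y list \<Rightarrow> nat)
     \<Rightarrow> ('y list \<Rightarrow> bool) \<Rightarrow> real" where
  "err_prob W M enc dec stop = (\<Sum>n. err_prob_at W M enc dec stop n)"

definition is_VLF_code ::
  "('x \<Rightarrow> 'y::finite \<Rightarrow> real) \<Rightarrow> nat \<Rightarrow> real \<Rightarrow> (nat \<Rightarrow> 'y list \<Rightarrow> 'x) \<Rightarrow> ('y list \<Rightarrow> nat)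
     \<Rightarrow> ('y list \<Rightarrow> bool) \<Rightarrow> bool" where
  "is_VLF_code W M N enc dec stop \<longleftrightarrow>
     1 \<le> M \<and> (\<forall>ys. dec ys \<in> {1..M}) \<and>
     (stop_prob W M enc stop sums 1) \<and>
     summable (\<lambda>n. real n * stop_prob W M enc stop n) \<and>
     (\<Sum>n. real n * stop_prob W M enc stop n) \<le> N"

definition md_exponent :: "real \<Rightarrow> real \<Rightarrow> real \<Rightarrow> ereal" where
  "md_exponent pe N r = (if pe = 0 then \<infinity> else ereal (- ln pe / (N * r)))"

definition md_achievable :: "('x::finite \<Rightarrow> 'y::finite \<Rightarrow> real) \<Rightarrow> (nat \<Rightarrow> real) \<Rightarrow> real \<Rightarrow> bool" where
  "md_achievable W \<rho> E \<longleftrightarrow> 0 \<le> E \<and>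
     (\<exists>(Ms :: nat \<Rightarrow> nat) (encs :: nat \<Rightarrow> nat \<Rightarrow> 'y list \<Rightarrow> 'x) decs stops.
        (\<forall>N\<ge>1. is_VLF_code W (Ms N) (real N) (encs N) (decs N) (stops N) \<and>
                 ln (real (Ms N)) / real N \<ge> capacity W - \<rho> N) \<and>
        (\<lambda>N. err_prob W (Ms N) (encs N) (decs N) (stops N)) \<longlonglongrightarrow> 0 \<and>
        ereal E \<le> liminf (\<lambda>N. md_exponent (err_prob W (Ms N) (encs N) (decs N) (stops N))
                                             (real N) (\<rho> N)))"

definition E_star :: "('x::finite \<Rightarrow> 'y::finite \<Rightarrow> real) \<Rightarrow> (nat \<Rightarrow> real) \<Rightarrow> ereal" where
  "E_star W \<rho> = Sup (ereal ` {E. md_achievable W \<rho> E})"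

end

theory Submission
  imports Defs
begin

lemma jensen_ln:
  fixes a z :: "'i \<Rightarrow> real"
  assumes "finite I" "\<And>i. i \<in> I \<Longrightarrow> 0 \<le> a i" "\<And>i. i \<in> I \<Longrightarrow> 0 < z i" "sum a I = 1"
  shows "(\<Sum>i\<in>I. a i * ln (z i)) \<le> ln (\<Sum>i\<in>I. a i * z i)"
proof -
  define m where "m = (\<Sum>i\<in>I. a i * z i)"
  have "I \<noteq> {}" using assms(4) by auto
  have mpos: "0 < m"
  proof -
    obtain j where j: "j \<in> I" "0 < a j" using assms(2,4)
      by (metis order_le_less sum.neutral zero_neq_one)
    have "a j * z j \<le> m" unfolding m_def
      using assms(1,2,3) j by (intro member_le_sum) (auto intro: mult_nonneg_nonneg less_imp_le)
    moreover have "0 < a j * z j" using j assms(3) by auto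
    ultimately show ?thesis by linarith
  qed
  have "\<And>i. i \<in> I \<Longrightarrow> a i * ln (z i) \<le> a i * (ln m + z i / m - 1)"
  proof -
    fix i assume i: "i \<in> I"
    have "ln (z i / m) \<le> z i / m - 1" using assms(3)[OF i] mpos by (intro ln_le_minus_one) auto
    hence "ln (z i) \<le> ln m + z i / m - 1" using assms(3)[OF i] mpos by (simp add: ln_div)
    thus "a i * ln (z i) \<le> a i * (ln m + z i / m - 1)" using assms(2)[OF i] by (rule mult_left_mono)
  qed
  hence "(\<Sum>i\<in>I. a i * ln (z i)) \<le> (\<Sum>i\<in>I. a i * (ln m + z i / m - 1))" by (rule sum_mono)
  also have "\<dots> = ln m * sum a I + (\<Sum>i\<in>I. a i * z i) / m - sum a I"
    by (simp add: algebra_simps sum.distrib sum_subtractf sum_distrib_left sum_divide_distrib)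
  also have "\<dots> = ln m" using assms(4) mpos by (simp add: m_def)
  finally show ?thesis by (simp add: m_def)
qed

lemma finite_len: "finite {ys :: 'y::finite list. length ys = n}"
proof -
  have "{ys :: 'y list. length ys = n} = {ys. set ys \<subseteq> UNIV \<and> length ys = n}" by auto
  thus ?thesis using finite_lists_length_eq[of "UNIV :: 'y set" n] by simp
qed

lemma sum_len_Suc:
  "(\<Sum>ys\<in>{ys::'y::finite list. length ys = Suc n}. f ys) =
   (\<Sum>ys\<in>{ys. length ys = n}. \<Sum>y\<in>UNIV. f (ys @ [y]))"
proof -
  have img: "{ys::'y list. length ys = Suc n} = (\<lambda>(ys,y). ys @ [y]) ` ({ys. length ys = n} \<times> UNIV)"
  proof (rule set_eqI, rule iffI)
    fix zs :: "'y list" assume "zs \<in> {ys. length ys = Suc n}"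
    hence "length zs = Suc n" by simp
    then obtain ys y where "zs = ys @ [y]" by (metis length_Suc_conv_rev)
    thus "zs \<in> (\<lambda>(ys,y). ys @ [y]) ` ({ys. length ys = n} \<times> UNIV)"
      using \<open>length zs = Suc n\<close> by (auto intro!: image_eqI[where x="(ys,y)"])
  qed auto
  have inj: "inj_on (\<lambda>(ys,y). ys @ [y]) ({ys::'y list. length ys = n} \<times> UNIV)"
    by (auto simp: inj_on_def)
  have "(\<Sum>ys\<in>{ys::'y::finite list. length ys = Suc n}. f ys) =
        (\<Sum>p\<in>{ys. length ys = n} \<times> UNIV. f ((\<lambda>(ys,y). ys @ [y]) p))"
    unfolding img by (rule sum.reindex[OF inj, unfolded comp_def])
  also have "\<dots> = (\<Sum>ys\<in>{ys. length ys = n}. \<Sum>y\<in>UNIV. f (ys @ [y]))"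
    by (simp add: sum.cartesian_product split_def)
  finally show ?thesis .
qed

definition alive :: "('y list \<Rightarrow> bool) \<Rightarrow> 'y list \<Rightarrow> bool" where
  "alive S ys \<longleftrightarrow> (\<forall>k<length ys. \<not> S (take k ys))"

lemma alive_Nil[simp]: "alive S []" by (simp add: alive_def)

lemma alive_snoc: "alive S (ys @ [y]) \<longleftrightarrow> alive S ys \<and> \<not> S ys"
proof -
  have "(\<forall>k<Suc (length ys). \<not> S (take k (ys @ [y]))) \<longleftrightarrow>
        (\<forall>k<length ys. \<not> S (take k ys)) \<and> \<not> S ys"
    by (auto simp: less_Suc_eq)
  thus ?thesis by (simp add: alive_def)
qed

lemma telescope_level:
  fixes F :: "'y::finite list \<Rightarrow> real"
  shows "(\<Sum>ys\<in>{ys. length ys = n}. if alive S ys then F ys else 0) =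
     F [] + (\<Sum>k<n. \<Sum>ys\<in>{ys. length ys = k}. if alive S ys \<and> \<not> S ys then (\<Sum>y\<in>UNIV. F (ys @ [y])) - F ys else 0)
          - (\<Sum>k<n. \<Sum>ys\<in>{ys. length ys = k}. if alive S ys \<and> S ys then F ys else 0)"
proof (induction n)
  case 0
  have "{ys :: 'y list. length ys = 0} = {[]}" by auto
  thus ?case by simp
next
  case (Suc n)
  let ?L = "\<lambda>n. (\<Sum>ys\<in>{ys::'y list. length ys = n}. if alive S ys then F ys else 0)"
  have "?L (Suc n) = (\<Sum>ys\<in>{ys. length ys = n}. \<Sum>y\<in>UNIV. if alive S (ys @ [y]) then F (ys @ [y]) else 0)"
    by (rule sum_len_Suc)
  also have "\<dots> = (\<Sum>ys\<in>{ys. length ys = n}. if alive S ys \<and> \<not> S ys then (\<Sum>y\<in>UNIV. F (ys @ [y])) else 0)"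
    by (rule sum.cong) (auto simp: alive_snoc)
  also have "\<dots> = (\<Sum>ys\<in>{ys. length ys = n}. if alive S ys \<and> \<not> S ys then (\<Sum>y\<in>UNIV. F (ys @ [y])) - F ys else 0)
     + ?L n - (\<Sum>ys\<in>{ys. length ys = n}. if alive S ys \<and> S ys then F ys else 0)"
    by (simp add: sum.distrib[symmetric] sum_subtractf[symmetric] if_distrib cong: if_cong)
       (rule sum.cong, auto)
  finally show ?case using Suc.IH by simp
qed

locale vtree =
  fixes W :: "'x::finite \<Rightarrow> 'y::finite \<Rightarrow> real" and enc :: "nat \<Rightarrow> 'y list \<Rightarrow> 'x"
    and M :: nat and lam :: real
  assumes stoch: "stoch_matrix W" and ratio: "\<And>x x' y. W x y \<le> lam * W x' y" and M2: "2 \<le> M"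
begin

lemma W_nonneg: "0 \<le> W x y" using stoch by (simp add: stoch_matrix_def)
lemma W_sum: "(\<Sum>y\<in>UNIV. W x y) = 1" using stoch by (simp add: stoch_matrix_def)
lemma W_pos_transfer: "0 < W x y \<Longrightarrow> 0 < W x' y"
  using ratio[of x y x'] W_nonneg[of x' y]
  by (metis less_eq_real_def mult_zero_right order_less_le_trans)

definition "q w ys = path_prob W enc w ys"
definition "Z ys = (\<Sum>w\<in>{1..M}. q w ys)"
definition "pp w ys = q w ys / Z ys"

lemma q_Nil[simp]: "q w [] = 1" by (simp add: q_def path_prob_def)

lemma q_snoc: "q w (ys @ [y]) = q w ys * W (enc w ys) y"
proof -
  have "q w (ys @ [y]) = (\<Prod>i<Suc (length ys). W (enc w (take i (ys @ [y]))) ((ys @ [y]) ! i))"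
    by (simp add: q_def path_prob_def)
  also have "\<dots> = (\<Prod>i<length ys. W (enc w (take i (ys @ [y]))) ((ys @ [y]) ! i)) * W (enc w ys) y"
    by (simp add: prod.lessThan_Suc)
  also have "(\<Prod>i<length ys. W (enc w (take i (ys @ [y]))) ((ys @ [y]) ! i)) = q w ys"
    unfolding q_def path_prob_def by (rule prod.cong) (auto simp: nth_append)
  finally show ?thesis .
qed

lemma q_nonneg: "0 \<le> q w ys"
  by (induction ys rule: rev_induct) (auto simp: q_snoc W_nonneg)

lemma Z_nonneg: "0 \<le> Z ys" unfolding Z_def by (rule sum_nonneg) (simp add: q_nonneg)

lemma q_le_Z: "w \<in> {1..M} \<Longrightarrow> q w ys \<le> Z ys"
  unfolding Z_def by (rule member_le_sum) (auto simp: q_nonneg)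

lemma Z_Nil[simp]: "Z [] = real M" by (simp add: Z_def)

lemma Z_snoc: "Z (ys @ [y]) = (\<Sum>w\<in>{1..M}. q w ys * W (enc w ys) y)"
  by (simp add: Z_def q_snoc)

lemma Z_children: "(\<Sum>y\<in>UNIV. Z (ys @ [y])) = Z ys"
proof -
  have "(\<Sum>y\<in>UNIV. Z (ys @ [y])) = (\<Sum>w\<in>{1..M}. q w ys * (\<Sum>y\<in>UNIV. W (enc w ys) y))"
    by (simp add: Z_snoc sum.swap[of _ UNIV] sum_distrib_left)
  thus ?thesis by (simp add: W_sum Z_def)
qed

lemma Z_zero_q: "Z ys = 0 \<Longrightarrow> w \<in> {1..M} \<Longrightarrow> q w ys = 0"
  using q_le_Z[of w ys] q_nonneg[of w ys] by linarith

lemma Z_pos_q: "0 < Z ys \<Longrightarrow> w \<in> {1..M} \<Longrightarrow> 0 < q w ys"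
proof (induction ys arbitrary: w rule: rev_induct)
  case Nil thus ?case by simp
next
  case (snoc y ys)
  have "\<exists>v\<in>{1..M}. 0 < q v ys * W (enc v ys) y"
  proof (rule ccontr)
    assume "\<not> ?thesis"
    hence "Z (ys @ [y]) \<le> 0" unfolding Z_snoc by (intro sum_nonpos) (auto simp: not_less)
    thus False using snoc.prems(1) by linarith
  qed
  then obtain v where v: "v \<in> {1..M}" "0 < q v ys * W (enc v ys) y" by blast
  hence qv: "0 < q v ys" and Wv: "0 < W (enc v ys) y"
    using q_nonneg[of v ys] W_nonneg[of "enc v ys" y]
    by (auto simp: zero_less_mult_iff)
  have "0 < Z ys" using q_le_Z[OF v(1), of ys] qv by linarith
  hence "0 < q w ys" using snoc.IH snoc.prems(2) by blast
  moreover have "0 < W (enc w ys) y" using W_pos_transfer[OF Wv] .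
  ultimately show ?case by (simp add: q_snoc)
qed

lemma Z_prefix_pos: "0 < Z (ys @ zs) \<Longrightarrow> 0 < Z ys"
proof (induction zs rule: rev_induct)
  case Nil thus ?case by simp
next
  case (snoc z zs)
  have "M \<ge> 1" using M2 by simp
  hence "1 \<in> {1..M}" by simp
  have "0 < q 1 (ys @ zs @ [z])" using Z_pos_q snoc.prems \<open>1 \<in> {1..M}\<close> by simp
  hence "0 < q 1 (ys @ zs)" using q_nonneg[of 1 "ys @ zs"] W_nonneg
    by (metis append_assoc q_snoc less_eq_real_def mult_zero_left)
  hence "0 < Z (ys @ zs)" using q_le_Z[OF \<open>1 \<in> {1..M}\<close>] by (meson less_le_trans)
  thus ?case using snoc.IH by blast
qed

lemma Z_take_pos: "0 < Z ys \<Longrightarrow> 0 < Z (take k ys)"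
  using Z_prefix_pos[of "take k ys" "drop k ys"] by simp

lemma pp_sum: "0 < Z ys \<Longrightarrow> (\<Sum>w\<in>{1..M}. pp w ys) = 1"
  by (simp add: pp_def sum_divide_distrib[symmetric] Z_def)

lemma pp_pos: "0 < Z ys \<Longrightarrow> w \<in> {1..M} \<Longrightarrow> 0 < pp w ys"
  by (simp add: pp_def Z_pos_q)

lemma pp_lt1: "0 < Z ys \<Longrightarrow> w \<in> {1..M} \<Longrightarrow> pp w ys < 1"
proof -
  assume Z: "0 < Z ys" and w: "w \<in> {1..M}"
  define v where "v = (if w = 1 then 2 else (1::nat))"
  have v: "v \<in> {1..M}" "v \<noteq> w" using M2 w by (auto simp: v_def)
  have "pp w ys + pp v ys \<le> (\<Sum>u\<in>{1..M}. pp u ys)"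
  proof -
    have "(\<Sum>u\<in>{w,v}. pp u ys) \<le> (\<Sum>u\<in>{1..M}. pp u ys)"
      using v w Z by (intro sum_mono2) (auto simp: pp_pos less_imp_le)
    thus ?thesis using v by simp
  qed
  thus ?thesis using pp_sum[OF Z] pp_pos[OF Z v(1)] by linarith
qed

end

context vtree begin

definition "Gn ys = (\<Sum>w\<in>{1..M}. pp w ys * ln (pp w ys))"
definition "Pin ys x = (\<Sum>w\<in>{w\<in>{1..M}. enc w ys = x}. q w ys) / Z ys"

lemma ZGn: "Z ys * Gn ys = (\<Sum>w\<in>{1..M}. q w ys * ln (q w ys / Z ys))"
proof (cases "Z ys = 0")
  case True thus ?thesis by (simp add: Gn_def)
next
  case False thus ?thesis by (simp add: Gn_def pp_def sum_distrib_left)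
qed

lemma group_enc: "(\<Sum>x\<in>UNIV. (\<Sum>w\<in>{w\<in>{1..M}. enc w ys = x}. q w ys) * h x) =
   (\<Sum>w\<in>{1..M}. q w ys * h (enc w ys))"
proof -
  have "(\<Sum>x\<in>UNIV. (\<Sum>w\<in>{w\<in>{1..M}. enc w ys = x}. q w ys) * h x) =
        (\<Sum>x\<in>UNIV. (\<Sum>w\<in>{w\<in>{1..M}. enc w ys = x}. q w ys * h (enc w ys)))"
    by (simp add: sum_distrib_right)
  also have "\<dots> = (\<Sum>w\<in>{1..M}. q w ys * h (enc w ys))"
    by (rule sum.group) auto
  finally show ?thesis .
qed

lemma Pin_dist: "0 < Z ys \<Longrightarrow> Pin ys \<in> input_dists"
proof -
  assume Z: "0 < Z ys"
  have "(\<Sum>x\<in>UNIV. Pin ys x) = (\<Sum>x\<in>UNIV. (\<Sum>w\<in>{w\<in>{1..M}. enc w ys = x}. q w ys) * (1 / Z ys))"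
    by (simp add: Pin_def)
  also have "\<dots> = (\<Sum>w\<in>{1..M}. q w ys * (1 / Z ys))" by (rule group_enc)
  also have "\<dots> = (\<Sum>w\<in>{1..M}. q w ys) / Z ys" by (simp add: sum_divide_distrib)
  also have "\<dots> = 1" using Z unfolding Z_def by simp
  finally show ?thesis using Z unfolding input_dists_def Pin_def
    by (auto intro!: divide_nonneg_pos sum_nonneg q_nonneg)
qed

lemma out_Pin: "0 < Z ys \<Longrightarrow> out_dist (Pin ys) W y = Z (ys @ [y]) / Z ys"
proof -
  assume Z: "0 < Z ys"
  have "out_dist (Pin ys) W y = (\<Sum>x\<in>UNIV. (\<Sum>w\<in>{w\<in>{1..M}. enc w ys = x}. q w ys) * (W x y / Z ys))"
    by (simp add: out_dist_def Pin_def)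
  also have "\<dots> = (\<Sum>w\<in>{1..M}. q w ys * (W (enc w ys) y / Z ys))" by (rule group_enc)
  also have "\<dots> = Z (ys @ [y]) / Z ys" by (simp add: Z_snoc sum_divide_distrib)
  finally show ?thesis .
qed

lemma mi_Pin: "0 < Z ys \<Longrightarrow> Z ys * mutual_info (Pin ys) W =
   (\<Sum>w\<in>{1..M}. q w ys * (\<Sum>y\<in>UNIV. W (enc w ys) y * ln (W (enc w ys) y / (Z (ys @ [y]) / Z ys))))"
proof -
  assume Z: "0 < Z ys"
  have "mutual_info (Pin ys) W = (\<Sum>x\<in>UNIV. (\<Sum>w\<in>{w\<in>{1..M}. enc w ys = x}. q w ys) *
      ((\<Sum>y\<in>UNIV. W x y * ln (W x y / (Z (ys @ [y]) / Z ys))) / Z ys))"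
    unfolding mutual_info_def
  proof (rule sum.cong[OF refl])
    fix x
    have "(\<Sum>y\<in>UNIV. Pin ys x * W x y * ln (W x y / out_dist (Pin ys) W y)) =
      Pin ys x * (\<Sum>y\<in>UNIV. W x y * ln (W x y / (Z (ys @ [y]) / Z ys)))"
      by (simp add: out_Pin[OF Z] sum_distrib_left mult.assoc)
    thus "(\<Sum>y\<in>UNIV. Pin ys x * W x y * ln (W x y / out_dist (Pin ys) W y)) =
      (\<Sum>w\<in>{w\<in>{1..M}. enc w ys = x}. q w ys) * ((\<Sum>y\<in>UNIV. W x y * ln (W x y / (Z (ys @ [y]) / Z ys))) / Z ys)"
      by (simp add: Pin_def)
  qed
  also have "\<dots> = (\<Sum>w\<in>{1..M}. q w ys * ((\<Sum>y\<in>UNIV. W (enc w ys) y * ln (W (enc w ys) y / (Z (ys @ [y]) / Z ys))) / Z ys))"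
    by (rule group_enc)
  finally show ?thesis using Z by (simp add: sum_distrib_left sum_divide_distrib)
qed

lemma G_drift: assumes Z: "0 < Z ys"
  shows "(\<Sum>y\<in>UNIV. Z (ys @ [y]) * Gn (ys @ [y])) - Z ys * Gn ys = Z ys * mutual_info (Pin ys) W"
proof -
  have tm: "q w ys * W (enc w ys) y * ln (q w ys * W (enc w ys) y / Z (ys @ [y])) =
      q w ys * ln (q w ys / Z ys) * W (enc w ys) y +
      q w ys * (W (enc w ys) y * ln (W (enc w ys) y / (Z (ys @ [y]) / Z ys)))"
    if w: "w \<in> {1..M}" for w y
  proof (cases "W (enc w ys) y = 0")
    case True thus ?thesis by simp
  next
    case False
    hence Wp: "0 < W (enc w ys) y" using W_nonneg[of "enc w ys" y] by linarith
    have qp: "0 < q w ys" using Z_pos_q[OF Z w] .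
    have "q w (ys @ [y]) \<le> Z (ys @ [y])" using q_le_Z[OF w] .
    hence mp: "0 < Z (ys @ [y])" using qp Wp by (simp add: q_snoc) (smt (verit) mult_pos_pos)
    have "q w ys * W (enc w ys) y / Z (ys @ [y]) = (q w ys / Z ys) * (W (enc w ys) y / (Z (ys @ [y]) / Z ys))"
      using Z mp by (simp add: field_simps)
    moreover have "0 < q w ys / Z ys" "0 < W (enc w ys) y / (Z (ys @ [y]) / Z ys)"
      using Z mp qp Wp by auto
    ultimately have "ln (q w ys * W (enc w ys) y / Z (ys @ [y])) = ln (q w ys / Z ys) + ln (W (enc w ys) y / (Z (ys @ [y]) / Z ys))"
      using ln_mult_pos by presburger
    thus ?thesis by (simp add: algebra_simps)
  qed
  have "(\<Sum>y\<in>UNIV. Z (ys @ [y]) * Gn (ys @ [y])) =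
        (\<Sum>y\<in>UNIV. \<Sum>w\<in>{1..M}. q w ys * W (enc w ys) y * ln (q w ys * W (enc w ys) y / Z (ys @ [y])))"
    by (simp add: ZGn q_snoc)
  also have "\<dots> = (\<Sum>y\<in>UNIV. \<Sum>w\<in>{1..M}. q w ys * ln (q w ys / Z ys) * W (enc w ys) y +
      q w ys * (W (enc w ys) y * ln (W (enc w ys) y / (Z (ys @ [y]) / Z ys))))"
    by (intro sum.cong refl tm) 
  also have "\<dots> = (\<Sum>w\<in>{1..M}. q w ys * ln (q w ys / Z ys) * (\<Sum>y\<in>UNIV. W (enc w ys) y)) +
      (\<Sum>w\<in>{1..M}. q w ys * (\<Sum>y\<in>UNIV. W (enc w ys) y * ln (W (enc w ys) y / (Z (ys @ [y]) / Z ys))))"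
    by (simp add: sum.distrib sum.swap[of _ UNIV] sum_distrib_left)
  also have "\<dots> = Z ys * Gn ys + Z ys * mutual_info (Pin ys) W"
    by (simp add: W_sum ZGn mi_Pin[OF Z])
  finally show ?thesis by simp
qed

end

lemma ln_inv_nonneg: "0 \<le> (x::real) \<Longrightarrow> ln (1 / x) = - ln x"
  by (cases "x = 0") (auto simp: ln_div)

lemma weighted_ln_id:
  fixes Zc qs :: real assumes "0 \<le> qs" "qs \<le> Zc"
  shows "Zc * ((qs / Zc) * (- ln (1 - qs / Zc))) = qs * ln (Zc / (Zc - qs))"
proof (cases "Zc = 0")
  case True thus ?thesis using assms by simp
next
  case False
  hence Zp: "0 < Zc" using assms by linarith
  define x where "x = (Zc - qs) / Zc"
  have x1: "1 - qs / Zc = x" using Zp by (simp add: x_def diff_divide_distrib)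
  have x2: "Zc / (Zc - qs) = 1 / x" by (simp add: x_def)
  have x0: "0 \<le> x" using assms Zp by (simp add: x_def)
  have "- ln (1 - qs / Zc) = ln (Zc / (Zc - qs))"
    unfolding x1 x2 ln_inv_nonneg[OF x0] ..
  thus ?thesis using Zp by simp
qed

context vtree begin

definition "Ln ys = (\<Sum>w\<in>{1..M}. pp w ys * (- ln (1 - pp w ys)))"

lemma ZLn: "Z ys * Ln ys = (\<Sum>w\<in>{1..M}. q w ys * ln (Z ys / (Z ys - q w ys)))"
  unfolding Ln_def sum_distrib_left pp_def
  by (rule sum.cong[OF refl], rule weighted_ln_id) (auto simp: q_nonneg q_le_Z)

lemma R_eq: "w \<in> {1..M} \<Longrightarrow> Z (ys @ [y]) - q w ys * W (enc w ys) y =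
   (\<Sum>v\<in>{1..M} - {w}. q v ys * W (enc v ys) y)"
  using sum.remove[of "{1..M}" w "\<lambda>v. q v ys * W (enc v ys) y"] by (simp add: Z_snoc)

lemma Q_eq: "w \<in> {1..M} \<Longrightarrow> Z ys - q w ys = (\<Sum>v\<in>{1..M} - {w}. q v ys)"
  using sum.remove[of "{1..M}" w "\<lambda>v. q v ys"] by (simp add: Z_def)

lemma Ln_step:
  assumes Z: "0 < Z ys" and w: "w \<in> {1..M}"
    and KL: "\<And>x x'. (\<Sum>y\<in>UNIV. W x y * ln (W x y / W x' y)) \<le> B"
  shows "(\<Sum>y\<in>UNIV. W (enc w ys) y * ln (Z (ys @ [y]) / (Z (ys @ [y]) - q w ys * W (enc w ys) y)))
          - ln (Z ys / (Z ys - q w ys)) \<le> B"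
proof -
  define xw where "xw = enc w ys"
  define Q where "Q = Z ys - q w ys"
  define V where "V = {1..M} - {w}"
  have qw: "0 < q w ys" using Z_pos_q[OF Z w] .
  have Qp: "0 < Q" using pp_lt1[OF Z w] Z unfolding Q_def pp_def by (simp add: field_simps)
  have QV: "Q = (\<Sum>v\<in>V. q v ys)" unfolding Q_def V_def by (rule Q_eq[OF w])
  have finV: "finite V" by (simp add: V_def)
  have qV: "v \<in> V \<Longrightarrow> 0 < q v ys" for v using Z_pos_q[OF Z] by (auto simp: V_def)
  have pt: "W xw y * (ln (Z (ys @ [y]) / (Z (ys @ [y]) - q w ys * W xw y)) - ln (Z ys / Q))
        \<le> (Z (ys @ [y]) / Z ys - W xw y) + (\<Sum>v\<in>V. (q v ys / Q) * (W xw y * ln (W xw y / W (enc v ys) y)))"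
    for y
  proof (cases "W xw y = 0")
    case True
    have "0 \<le> Z (ys @ [y]) / Z ys" using Z Z_nonneg by simp
    thus ?thesis using True by simp
  next
    case False
    define Wy where "Wy = W xw y"
    define Zc where "Zc = Z (ys @ [y])"
    define R where "R = (\<Sum>v\<in>V. q v ys * W (enc v ys) y)"
    have Wyp: "0 < Wy" using False W_nonneg[of xw y] by (simp add: Wy_def)
    have Wvp: "v \<in> V \<Longrightarrow> 0 < W (enc v ys) y" for v using W_pos_transfer Wyp by (simp add: Wy_def)
    have Rp: "0 < R" unfolding R_def
    proof -
      have "V \<noteq> {}" using Qp QV by auto
      thus "0 < (\<Sum>v\<in>V. q v ys * W (enc v ys) y)" using finV qV Wvp
        by (intro sum_pos) auto
    qed
    have RZc: "R = Zc - q w ys * Wy"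
      unfolding R_def Zc_def Wy_def xw_def V_def using R_eq[OF w] by simp
    have "0 < q w ys * Wy" using qw Wyp by simp
    hence Zcp: "0 < Zc" using Rp RZc by linarith
    have split: "ln (Zc / R) - ln (Z ys / Q) = ln ((Zc / Z ys) / Wy) + ln (Wy * Q / R)"
      using Zcp Rp Z Qp Wyp by (simp add: ln_div ln_mult_pos)
    have p1: "Wy * ln ((Zc / Z ys) / Wy) \<le> Zc / Z ys - Wy"
    proof -
      have "ln ((Zc / Z ys) / Wy) \<le> (Zc / Z ys) / Wy - 1"
        using Zcp Z Wyp by (intro ln_le_minus_one) simp
      hence "Wy * ln ((Zc / Z ys) / Wy) \<le> Wy * ((Zc / Z ys) / Wy - 1)"
        using Wyp by (simp add: mult_left_mono)
      thus ?thesis using Wyp by (simp add: field_simps)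
    qed
    have jen: "(\<Sum>v\<in>V. (q v ys / Q) * ln (W (enc v ys) y / Wy)) \<le> ln (\<Sum>v\<in>V. (q v ys / Q) * (W (enc v ys) y / Wy))"
      using finV qV Qp Wvp Wyp by (intro jensen_ln) (auto simp: QV[symmetric] sum_divide_distrib[symmetric] less_imp_le)
    have sumz: "(\<Sum>v\<in>V. (q v ys / Q) * (W (enc v ys) y / Wy)) = R / (Q * Wy)"
      unfolding R_def by (simp add: sum_divide_distrib)
    have "ln (Wy * Q / R) = - ln (R / (Q * Wy))" using Rp Qp Wyp by (simp add: ln_div ln_mult_pos)
    also have "\<dots> \<le> - (\<Sum>v\<in>V. (q v ys / Q) * ln (W (enc v ys) y / Wy))" using jen sumz by simp
    also have "\<dots> = (\<Sum>v\<in>V. (q v ys / Q) * ln (Wy / W (enc v ys) y))"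
      unfolding sum_negf[symmetric]
    proof (rule sum.cong[OF refl])
      fix v assume "v \<in> V"
      thus "- (q v ys / Q * ln (W (enc v ys) y / Wy)) = q v ys / Q * ln (Wy / W (enc v ys) y)"
        using Wvp[of v] Wyp by (simp add: ln_div algebra_simps)
    qed
    finally have "Wy * ln (Wy * Q / R) \<le> Wy * (\<Sum>v\<in>V. (q v ys / Q) * ln (Wy / W (enc v ys) y))"
      using Wyp by (simp add: mult_left_mono)
    also have "\<dots> = (\<Sum>v\<in>V. (q v ys / Q) * (Wy * ln (Wy / W (enc v ys) y)))"
      by (simp add: sum_distrib_left mult.left_commute)
    finally have p2: "Wy * ln (Wy * Q / R) \<le> (\<Sum>v\<in>V. (q v ys / Q) * (Wy * ln (Wy / W (enc v ys) y)))" .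
    have "Wy * (ln (Zc / R) - ln (Z ys / Q)) = Wy * ln ((Zc / Z ys) / Wy) + Wy * ln (Wy * Q / R)"
      by (simp add: split distrib_left)
    also have "\<dots> \<le> (Zc / Z ys - Wy) + (\<Sum>v\<in>V. (q v ys / Q) * (Wy * ln (Wy / W (enc v ys) y)))"
      using p1 p2 by linarith
    finally show ?thesis using RZc unfolding Wy_def Zc_def by simp
  qed
  have "(\<Sum>y\<in>UNIV. W xw y * ln (Z (ys @ [y]) / (Z (ys @ [y]) - q w ys * W xw y))) - ln (Z ys / Q)
      = (\<Sum>y\<in>UNIV. W xw y * (ln (Z (ys @ [y]) / (Z (ys @ [y]) - q w ys * W xw y)) - ln (Z ys / Q)))"
    using W_sum[of xw] by (simp add: right_diff_distrib sum_subtractf sum_distrib_right[symmetric])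
  also have "\<dots> \<le> (\<Sum>y\<in>UNIV. (Z (ys @ [y]) / Z ys - W xw y) + (\<Sum>v\<in>V. (q v ys / Q) * (W xw y * ln (W xw y / W (enc v ys) y))))"
    by (rule sum_mono) (rule pt)
  also have "\<dots> = ((\<Sum>y\<in>UNIV. Z (ys @ [y])) / Z ys - 1) + (\<Sum>v\<in>V. (q v ys / Q) * (\<Sum>y\<in>UNIV. W xw y * ln (W xw y / W (enc v ys) y)))"
    using W_sum[of xw] by (simp add: sum.distrib sum_subtractf sum_divide_distrib sum.swap[of _ UNIV V] sum_distrib_left)
  also have "\<dots> \<le> 0 + (\<Sum>v\<in>V. (q v ys / Q) * B)"
    using Z Z_children[of ys] qV Qp
    by (intro add_mono sum_mono mult_left_mono KL) (auto simp: less_imp_le)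
  also have "\<dots> = B" using Qp by (simp add: sum_distrib_right[symmetric] sum_divide_distrib[symmetric] QV[symmetric])
  finally show ?thesis by (simp add: xw_def Q_def)
qed

lemma L_drift:
  assumes Z: "0 < Z ys"
    and KL: "\<And>x x'. (\<Sum>y\<in>UNIV. W x y * ln (W x y / W x' y)) \<le> B"
  shows "(\<Sum>y\<in>UNIV. Z (ys @ [y]) * Ln (ys @ [y])) - Z ys * Ln ys \<le> B * Z ys"
proof -
  have "(\<Sum>y\<in>UNIV. Z (ys @ [y]) * Ln (ys @ [y])) =
        (\<Sum>y\<in>UNIV. \<Sum>w\<in>{1..M}. q w ys * W (enc w ys) y * ln (Z (ys @ [y]) / (Z (ys @ [y]) - q w ys * W (enc w ys) y)))"
    by (simp add: ZLn q_snoc)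
  also have "\<dots> = (\<Sum>w\<in>{1..M}. q w ys * (\<Sum>y\<in>UNIV. W (enc w ys) y * ln (Z (ys @ [y]) / (Z (ys @ [y]) - q w ys * W (enc w ys) y))))"
    by (simp add: sum.swap[of _ UNIV] sum_distrib_left mult.assoc)
  finally have e1: "(\<Sum>y\<in>UNIV. Z (ys @ [y]) * Ln (ys @ [y])) - Z ys * Ln ys =
     (\<Sum>w\<in>{1..M}. q w ys * ((\<Sum>y\<in>UNIV. W (enc w ys) y * ln (Z (ys @ [y]) / (Z (ys @ [y]) - q w ys * W (enc w ys) y)))
          - ln (Z ys / (Z ys - q w ys))))"
    by (simp add: ZLn right_diff_distrib sum_subtractf)
  also have "\<dots> \<le> (\<Sum>w\<in>{1..M}. q w ys * B)"
    by (rule sum_mono, rule mult_left_mono, rule Ln_step[OF Z _ KL]) (auto simp: q_nonneg)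
  also have "\<dots> = B * Z ys" by (simp add: Z_def sum_distrib_left mult.commute)
  finally show ?thesis .
qed

end

context vtree begin

lemma pp_nonneg: "0 \<le> pp w ys" by (simp add: pp_def q_nonneg Z_nonneg)

lemma negGn: "- Gn ys = (\<Sum>w\<in>{1..M}. pp w ys * ln (1 / pp w ys))"
  unfolding Gn_def by (simp add: sum_negf[symmetric] ln_inv_nonneg pp_nonneg)

lemma entropy_max: assumes Z: "0 < Z ys" shows "- Gn ys \<le> ln M"
proof -
  have "(\<Sum>w\<in>{1..M}. pp w ys * ln (1 / pp w ys)) \<le> ln (\<Sum>w\<in>{1..M}. pp w ys * (1 / pp w ys))"
    using pp_pos[OF Z] pp_sum[OF Z] by (intro jensen_ln) (auto simp: less_imp_le)
  also have "(\<Sum>w\<in>{1..M}. pp w ys * (1 / pp w ys)) = (\<Sum>w\<in>{1..M}. 1)"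
    by (rule sum.cong[OF refl]) (use pp_pos[OF Z] in fastforce)
  also have "\<dots> = real M" by simp
  finally show ?thesis by (simp add: negGn)
qed

lemma plogp_le: "0 < p \<Longrightarrow> p * ln (1 / p) \<le> 1 - (p::real)"
proof -
  assume p: "0 < p"
  have "ln (1 / p) \<le> 1 / p - 1" using p by (intro ln_le_minus_one) simp
  hence "p * ln (1 / p) \<le> p * (1 / p - 1)" using p by (simp add: mult_left_mono)
  moreover have "p * (1 / p - 1) = 1 - p" using p by (simp add: right_diff_distrib)
  ultimately show ?thesis by linarith
qed

lemma entropy_conc: assumes Z: "0 < Z ys" and d: "d \<in> {1..M}" and pd: "1 - dl \<le> pp d ys"
  and dl: "0 \<le> dl"
  shows "- Gn ys \<le> dl + 1 + dl * ln M"
proof -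
  define V where "V = {1..M} - {d}"
  define s where "s = (\<Sum>w\<in>V. pp w ys)"
  have finV: "finite V" by (simp add: V_def)
  have pV: "w \<in> V \<Longrightarrow> 0 < pp w ys" for w using pp_pos[OF Z] by (auto simp: V_def)
  have split: "(\<Sum>w\<in>{1..M}. pp w ys * ln (1 / pp w ys)) = pp d ys * ln (1 / pp d ys) + (\<Sum>w\<in>V. pp w ys * ln (1 / pp w ys))"
    unfolding V_def using d by (simp add: sum.remove)
  have ssum: "pp d ys + s = 1" unfolding s_def V_def using d pp_sum[OF Z] by (simp add: sum.remove)
  have Vne: "V \<noteq> {}"
  proof -
    define v where "v = (if d = 1 then 2 else (1::nat))"
    have "v \<in> V" using M2 d by (auto simp: v_def V_def)
    thus ?thesis by auto
  qed
  have sp: "0 < s" unfolding s_def using finV Vne pV by (intro sum_pos) auto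
  have cardV: "card V \<le> M" "1 \<le> card V" using finV Vne d
    by (auto simp: V_def card_Diff_singleton card_gt_0_iff Suc_le_eq)
  have t1: "pp d ys * ln (1 / pp d ys) \<le> dl"
    using plogp_le[OF pp_pos[OF Z d]] pd by linarith
  have "(\<Sum>w\<in>V. (pp w ys / s) * ln (1 / pp w ys)) \<le> ln (\<Sum>w\<in>V. (pp w ys / s) * (1 / pp w ys))"
    using finV pV sp by (intro jensen_ln) (auto simp: less_imp_le s_def sum_divide_distrib[symmetric])
  also have "(\<Sum>w\<in>V. (pp w ys / s) * (1 / pp w ys)) = (\<Sum>w\<in>V. 1 / s)"
    by (rule sum.cong[OF refl]) (use pV in fastforce)
  also have "\<dots> = card V / s" by simp
  finally have "(\<Sum>w\<in>V. pp w ys * ln (1 / pp w ys)) / s \<le> ln (card V / s)"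
    by (simp add: sum_divide_distrib)
  hence "(\<Sum>w\<in>V. pp w ys * ln (1 / pp w ys)) \<le> s * ln (card V / s)"
    using sp by (simp add: field_simps)
  also have "\<dots> = s * ln (card V) + s * ln (1 / s)"
    using sp cardV by (simp add: ln_div algebra_simps)
  also have "\<dots> \<le> dl * ln M + 1"
  proof -
    have "ln (card V) \<le> ln M" using cardV by simp
    moreover have "0 \<le> ln (card V)" using cardV by simp
    moreover have "s \<le> dl" using ssum pd by linarith
    ultimately have "s * ln (card V) \<le> dl * ln M"
      using mult_mono[of s dl "ln (card V)" "ln M"] sp dl by linarith
    moreover have "s * ln (1 / s) \<le> 1" using plogp_le[OF sp] sp by linarith
    ultimately show ?thesis by linarith
  qed
  finally show ?thesis using t1 split by (simp add: negGn)
qed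

lemma Ln_leaf: assumes Z: "0 < Z ys" and d: "d \<in> {1..M}"
  shows "0 < 1 - pp d ys" "- ln (2 * (1 - pp d ys)) \<le> Ln ys"
proof -
  show e: "0 < 1 - pp d ys" using pp_lt1[OF Z d] by simp
  define S where "S = (\<Sum>w\<in>{1..M}. pp w ys * (1 - pp w ys))"
  have "(\<Sum>w\<in>{1..M}. pp w ys * ln (1 - pp w ys)) \<le> ln S"
    unfolding S_def using pp_pos[OF Z] pp_lt1[OF Z] pp_sum[OF Z]
    by (intro jensen_ln) (auto simp: less_imp_le)
  moreover have "S \<le> 2 * (1 - pp d ys)"
  proof -
    have "S = 1 - (\<Sum>w\<in>{1..M}. pp w ys ^ 2)"
    proof -
      have "S = (\<Sum>w\<in>{1..M}. pp w ys) - (\<Sum>w\<in>{1..M}. pp w ys ^ 2)"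
        unfolding S_def by (simp add: right_diff_distrib sum_subtractf power2_eq_square)
      thus ?thesis using pp_sum[OF Z] by simp
    qed
    moreover have "pp d ys ^ 2 \<le> (\<Sum>w\<in>{1..M}. pp w ys ^ 2)"
      using d by (intro member_le_sum) auto
    moreover have "pp d ys ^ 2 \<ge> 2 * pp d ys - 1"
    proof -
      have "0 \<le> (pp d ys - 1) ^ 2" by simp
      thus ?thesis by (simp add: power2_eq_square algebra_simps)
    qed
    ultimately show ?thesis by (simp add: algebra_simps)
  qed
  moreover have "0 < S" unfolding S_def using pp_pos[OF Z] pp_lt1[OF Z]
    using M2 by (intro sum_pos) auto
  ultimately have "(\<Sum>w\<in>{1..M}. pp w ys * ln (1 - pp w ys)) \<le> ln (2 * (1 - pp d ys))"
    using e \<open>0 < S\<close> ln_le_cancel_iff[of S "2 * (1 - pp d ys)"] by linarith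
  moreover have "Ln ys = - (\<Sum>w\<in>{1..M}. pp w ys * ln (1 - pp w ys))"
    unfolding Ln_def by (simp add: sum_negf[symmetric])
  ultimately show "- ln (2 * (1 - pp d ys)) \<le> Ln ys" by linarith
qed

lemma Ln_upper: assumes Z: "0 < Z ys" and b: "\<And>w. w \<in> {1..M} \<Longrightarrow> pp w ys \<le> 1 - c" and c: "0 < c"
  shows "Ln ys \<le> ln (1 / c)"
proof -
  have "Ln ys \<le> (\<Sum>w\<in>{1..M}. pp w ys * ln (1 / c))"
    unfolding Ln_def
  proof (rule sum_mono, rule mult_left_mono)
    fix w assume w: "w \<in> {1..M}"
    have "0 < 1 - pp w ys" using pp_lt1[OF Z w] by simp
    hence "ln c \<le> ln (1 - pp w ys)" using b[OF w] c by simp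
    thus "- ln (1 - pp w ys) \<le> ln (1 / c)" using c by (simp add: ln_div)
  qed (simp add: pp_nonneg)
  also have "\<dots> = ln (1 / c)" using pp_sum[OF Z] by (simp add: sum_distrib_right[symmetric])
  finally show ?thesis .
qed

end

locale vtree2 = vtree W enc M lam for W :: "'x::finite \<Rightarrow> 'y::finite \<Rightarrow> real" and enc M lam +
  fixes dl :: real
  assumes dl_pos: "0 < dl" and dl_half: "dl \<le> 1/2" and lam1: "1 \<le> lam"
begin

definition "conc ys = (\<exists>w\<in>{1..M}. 1 - dl \<le> pp w ys)"
definition "ph1 ys = (\<forall>k<length ys. \<not> conc (take k ys))"
definition "hasc ys = (\<exists>k\<le>length ys. conc (take k ys))"
definition "fk ys = (LEAST k. conc (take k ys))"
definition "anc ys = (if hasc ys then take (fk ys) ys else ys)"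
definition "Phi B C ys = Z ys * (B * Gn (anc ys) + C * (Ln ys - Ln (anc ys)))"

lemma child_bound:
  assumes Z: "0 < Z zs" and nc: "\<not> conc zs" and w: "w \<in> {1..M}"
  shows "pp w (zs @ [y]) \<le> 1 - dl / lam"
proof -
  define Ww where "Ww = W (enc w zs) y"
  define qw where "qw = q w zs"
  define Q where "Q = Z zs - qw"
  define V where "V = {1..M} - {w}"
  define R where "R = (\<Sum>v\<in>V. q v zs * W (enc v zs) y)"
  define t where "t = dl / lam"
  have lp: "0 < lam" using lam1 by simp
  have t0: "0 < t" "t \<le> dl" using dl_pos lam1 by (auto simp: t_def divide_le_eq)
  have Ww0: "0 \<le> Ww" by (simp add: Ww_def W_nonneg)
  have qw0: "0 \<le> qw" by (simp add: qw_def q_nonneg)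
  have Zc: "Z (zs @ [y]) = qw * Ww + R"
    using R_eq[OF w, of zs y] by (simp add: qw_def Ww_def R_def V_def)
  have QV: "Q = (\<Sum>v\<in>V. q v zs)" unfolding Q_def qw_def V_def by (rule Q_eq[OF w])
  have lamR: "Q * Ww \<le> lam * R"
  proof -
    have "Q * Ww = (\<Sum>v\<in>V. q v zs * Ww)" by (simp add: QV sum_distrib_right)
    also have "\<dots> \<le> (\<Sum>v\<in>V. q v zs * (lam * W (enc v zs) y))"
      by (intro sum_mono mult_left_mono) (auto simp: Ww_def ratio q_nonneg)
    also have "\<dots> = lam * R" by (simp add: R_def sum_distrib_left mult.left_commute)
    finally show ?thesis .
  qed
  have qlt: "qw \<le> (1 - dl) * Z zs"
  proof -
    have "pp w zs < 1 - dl" using nc w unfolding conc_def by force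
    thus ?thesis using Z by (simp add: pp_def qw_def divide_less_eq less_imp_le mult.commute)
  qed
  have key: "dl * qw \<le> (1 - t) * Q"
  proof -
    have "(1 - dl) * (1 + dl - t) \<le> 1 - t"
    proof -
      have "(1 - dl) * (1 + dl - t) = 1 - t - dl * (dl - t)" by (simp add: algebra_simps)
      moreover have "0 \<le> dl * (dl - t)" using t0 dl_pos by simp
      ultimately show ?thesis by linarith
    qed
    moreover have "qw * (1 + dl - t) \<le> (1 - dl) * Z zs * (1 + dl - t)"
      using qlt t0 dl_half by (intro mult_right_mono) auto
    ultimately have "qw * (1 + dl - t) \<le> (1 - t) * Z zs"
      using Z by (smt (verit, ccfv_SIG) mult.assoc mult.commute mult_right_mono)
    thus ?thesis by (simp add: Q_def algebra_simps)
  qed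
  have "t * (qw * Ww) \<le> (1 - t) * R"
  proof -
    have "t * (qw * Ww) = (dl * qw) * Ww / lam" by (simp add: t_def)
    also have "\<dots> \<le> ((1 - t) * Q) * Ww / lam"
      using key Ww0 lp by (intro divide_right_mono mult_right_mono) auto
    also have "\<dots> = (1 - t) * (Q * Ww / lam)" by simp
    also have "\<dots> \<le> (1 - t) * R"
      using lamR lp t0 dl_half by (intro mult_left_mono) (auto simp: divide_le_eq mult.commute)
    finally show ?thesis .
  qed
  have main: "qw * Ww \<le> (1 - t) * Z (zs @ [y])"
    using \<open>t * (qw * Ww) \<le> (1 - t) * R\<close> Zc by (simp add: algebra_simps)
  show ?thesis
  proof (cases "Z (zs @ [y]) = 0")
    case True
    have "dl / lam \<le> 1" using t0 dl_half unfolding t_def by linarith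
    thus ?thesis using True by (simp add: pp_def)
  next
    case False
    hence "0 < Z (zs @ [y])" using Z_nonneg[of "zs @ [y]"] by linarith
    thus ?thesis using main by (simp add: pp_def q_snoc qw_def Ww_def t_def divide_le_eq mult.commute)
  qed
qed

lemma ph1_bound: assumes "ph1 ys" "0 < Z ys" "w \<in> {1..M}" shows "pp w ys \<le> 1 - dl / lam"
proof (cases ys rule: rev_cases)
  case Nil
  have "dl / lam \<le> dl" using dl_pos lam1 by (simp add: divide_le_eq)
  moreover have "1 / real M \<le> 1 / 2" using M2 by (simp add: divide_le_eq)
  ultimately show ?thesis using Nil dl_half by (simp add: pp_def)
next
  case (snoc zs y)
  have "\<not> conc zs" using assms(1) unfolding ph1_def snoc by (metis append_eq_conv_conj length_append_singleton lessI)
  moreover have "0 < Z zs" using Z_prefix_pos assms(2) snoc by blast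
  ultimately show ?thesis using child_bound assms(3) snoc by blast
qed

end

context vtree2 begin

lemma fk_le: "hasc ys \<Longrightarrow> fk ys \<le> length ys"
  unfolding hasc_def fk_def by (meson Least_le order_trans)

lemma fk_conc: "hasc ys \<Longrightarrow> conc (take (fk ys) ys)"
  unfolding hasc_def fk_def by (meson LeastI)

lemma hasc_snoc: assumes "hasc ys" shows "hasc (ys @ [y])" "anc (ys @ [y]) = anc ys"
proof -
  obtain k where k: "k \<le> length ys" "conc (take k ys)" using assms unfolding hasc_def by blast
  show h: "hasc (ys @ [y])" unfolding hasc_def using k by (intro exI[of _ k]) auto
  have "fk (ys @ [y]) = fk ys"
    unfolding fk_def
  proof (rule Least_equality)
    show "conc (take (LEAST k. conc (take k ys)) (ys @ [y]))"
      using fk_conc[OF assms] fk_le[OF assms] by (simp add: fk_def)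
  next
    fix k' assume c: "conc (take k' (ys @ [y]))"
    show "(LEAST k. conc (take k ys)) \<le> k'"
    proof (cases "k' \<le> length ys")
      case True thus ?thesis using c by (intro Least_le) simp
    next
      case False thus ?thesis using fk_le[OF assms] by (simp add: fk_def)
    qed
  qed
  thus "anc (ys @ [y]) = anc ys" using h assms fk_le[OF assms] by (simp add: anc_def)
qed

lemma nohasc_snoc: assumes "\<not> hasc ys" shows "anc (ys @ [y]) = ys @ [y]"
proof (cases "hasc (ys @ [y])")
  case False thus ?thesis by (simp add: anc_def)
next
  case True
  have "fk (ys @ [y]) = Suc (length ys)"
    unfolding fk_def
  proof (rule Least_equality)
    obtain k where k: "k \<le> Suc (length ys)" "conc (take k (ys @ [y]))" using True unfolding hasc_def by auto
    have "k = Suc (length ys)"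
    proof (rule ccontr)
      assume "k \<noteq> Suc (length ys)"
      hence "k \<le> length ys" using k by simp
      thus False using assms k unfolding hasc_def by auto
    qed
    thus "conc (take (Suc (length ys)) (ys @ [y]))" using k by simp
  next
    fix k' assume c: "conc (take k' (ys @ [y]))"
    show "Suc (length ys) \<le> k'"
    proof (rule ccontr)
      assume "\<not> ?thesis" hence "k' \<le> length ys" by simp
      thus False using assms c unfolding hasc_def by auto
    qed
  qed
  thus ?thesis using True by (simp add: anc_def)
qed

lemma anc_ph1: "ph1 (anc ys)"
proof (cases "hasc ys")
  case True
  have "\<not> conc (take k (take (fk ys) ys))" if "k < fk ys" for k
    using not_less_Least[OF that[unfolded fk_def]] that by (simp add: fk_def min_def)
  thus ?thesis using True fk_le[OF True] by (simp add: anc_def ph1_def)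
next
  case False thus ?thesis by (auto simp: anc_def ph1_def hasc_def)
qed

lemma anc_cases: "(hasc ys \<and> conc (anc ys)) \<or> (\<not> hasc ys \<and> anc ys = ys \<and> \<not> conc ys)"
proof (cases "hasc ys")
  case True thus ?thesis using fk_conc by (simp add: anc_def)
next
  case False
  have "\<not> conc (take (length ys) ys)" using False unfolding hasc_def by blast
  thus ?thesis using False by (simp add: anc_def)
qed

lemma anc_Z: "0 < Z ys \<Longrightarrow> 0 < Z (anc ys)"
  by (simp add: anc_def Z_take_pos)

lemma Phi_drift:
  assumes KL: "\<And>x x'. (\<Sum>y\<in>UNIV. W x y * ln (W x y / W x' y)) \<le> B"
    and CAP: "\<And>P. P \<in> input_dists \<Longrightarrow> mutual_info P W \<le> C"
    and B0: "0 \<le> B" and C0: "0 \<le> C"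
  shows "(\<Sum>y\<in>UNIV. Phi B C (ys @ [y])) - Phi B C ys \<le> B * C * Z ys"
proof (cases "Z ys = 0")
  case True
  have "Z (ys @ [y]) = 0" for y
    by (simp add: Z_snoc Z_zero_q[OF True])
  thus ?thesis using True by (simp add: Phi_def)
next
  case False
  hence Z: "0 < Z ys" using Z_nonneg[of ys] by linarith
  show ?thesis
  proof (cases "hasc ys")
    case True
    define a where "a = anc ys"
    have ch: "Phi B C (ys @ [y]) = Z (ys @ [y]) * (B * Gn a - C * Ln a) + C * (Z (ys @ [y]) * Ln (ys @ [y]))" for y
      using hasc_snoc[OF True] by (simp add: Phi_def a_def algebra_simps)
    have "(\<Sum>y\<in>UNIV. Phi B C (ys @ [y])) = Z ys * (B * Gn a - C * Ln a) + C * (\<Sum>y\<in>UNIV. Z (ys @ [y]) * Ln (ys @ [y]))"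
      by (simp add: ch sum.distrib sum_distrib_left[symmetric] sum_distrib_right[symmetric] Z_children)
    moreover have "Phi B C ys = Z ys * (B * Gn a - C * Ln a) + C * (Z ys * Ln ys)"
      by (simp add: Phi_def a_def algebra_simps)
    moreover have "C * ((\<Sum>y\<in>UNIV. Z (ys @ [y]) * Ln (ys @ [y])) - Z ys * Ln ys) \<le> C * (B * Z ys)"
      using L_drift[OF Z KL] C0 by (rule mult_left_mono)
    ultimately show ?thesis by (simp add: algebra_simps)
  next
    case False
    have ch: "Phi B C (ys @ [y]) = B * (Z (ys @ [y]) * Gn (ys @ [y]))" for y
      using nohasc_snoc[OF False] by (simp add: Phi_def)
    have p: "Phi B C ys = B * (Z ys * Gn ys)" using False by (simp add: Phi_def anc_def)
    have "(\<Sum>y\<in>UNIV. Phi B C (ys @ [y])) - Phi B C ys = B * ((\<Sum>y\<in>UNIV. Z (ys @ [y]) * Gn (ys @ [y])) - Z ys * Gn ys)"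
      by (simp add: ch p sum_distrib_left right_diff_distrib)
    also have "\<dots> = B * (Z ys * mutual_info (Pin ys) W)" by (simp add: G_drift[OF Z])
    also have "\<dots> \<le> B * (Z ys * C)"
      using CAP[OF Pin_dist[OF Z]] Z B0 by (intro mult_left_mono) auto
    finally show ?thesis by (simp add: algebra_simps)
  qed
qed

lemma Phi_leaf:
  assumes B0: "0 \<le> B" and C0: "0 \<le> C" and eps: "0 < eps" and d: "d \<in> {1..M}"
  shows "Phi B C ys \<ge> Z ys * (- B * (dl + 1 + dl * ln M) + C * (1 - ln 2 - ln eps - ln (lam / dl)))
           - (B * ln M / dl + C / eps) * (Z ys - q d ys)"
proof (cases "Z ys = 0")
  case True thus ?thesis using Z_zero_q[OF True d] by (simp add: Phi_def)
next
  case False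
  hence Z: "0 < Z ys" using Z_nonneg[of ys] by linarith
  define e where "e = 1 - pp d ys"
  have ep: "0 < e" and Lleaf: "- ln (2 * e) \<le> Ln ys" using Ln_leaf[OF Z d] by (auto simp: e_def)
  have Ze: "Z ys * e = Z ys - q d ys" using Z by (simp add: e_def pp_def right_diff_distrib)
  have lnM: "0 \<le> ln (real M)" using M2 by simp
  have t1: "- Gn (anc ys) \<le> dl + 1 + dl * ln M + (e / dl) * ln M"
  proof (cases "hasc ys")
    case True
    hence "conc (anc ys)" using anc_cases by blast
    then obtain w where w: "w \<in> {1..M}" "1 - dl \<le> pp w (anc ys)" unfolding conc_def by blast
    have "- Gn (anc ys) \<le> dl + 1 + dl * ln M"
      using entropy_conc[OF anc_Z[OF Z] w] dl_pos by simp
    moreover have "0 \<le> (e / dl) * ln M" using ep dl_pos lnM by simp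
    ultimately show ?thesis by linarith
  next
    case False
    hence a: "anc ys = ys" "\<not> conc ys" using anc_cases by blast+
    have "\<not> (1 - dl \<le> pp d ys)" using a(2) d unfolding conc_def by blast
    hence "dl \<le> e" by (simp add: e_def)
    hence "1 \<le> e / dl" using dl_pos by (simp add: le_divide_eq)
    hence "1 * ln M \<le> (e / dl) * ln M" using lnM by (rule mult_right_mono)
    hence "ln M \<le> (e / dl) * ln M" by simp
    moreover have "- Gn ys \<le> ln M" by (rule entropy_max[OF Z])
    moreover have "0 \<le> dl + 1 + dl * ln M" using dl_pos lnM by simp
    ultimately show ?thesis unfolding a(1) by linarith
  qed
  have t2: "Ln (anc ys) \<le> ln (lam / dl)"
  proof -
    have "Ln (anc ys) \<le> ln (1 / (dl / lam))"
      using Ln_upper[OF anc_Z[OF Z] ph1_bound[OF anc_ph1 anc_Z[OF Z]]] dl_pos lam1 by simp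
    thus ?thesis by simp
  qed
  have t3: "- ln eps + 1 - e / eps \<le> - ln e"
  proof -
    have "ln (e / eps) \<le> e / eps - 1" using ep eps by (intro ln_le_minus_one) simp
    thus ?thesis using ep eps by (simp add: ln_div)
  qed
  have t4: "- ln (2 * e) = - ln 2 - ln e" using ep by (simp add: ln_mult_pos)
  have "Gn (anc ys) \<ge> - (dl + 1 + dl * ln M) - (e / dl) * ln M" using t1 by linarith
  hence "B * Gn (anc ys) \<ge> B * (- (dl + 1 + dl * ln M) - (e / dl) * ln M)" using B0 by (rule mult_left_mono)
  moreover have "Ln ys - Ln (anc ys) \<ge> 1 - ln 2 - ln eps - ln (lam / dl) - e / eps" using t2 t3 t4 Lleaf by linarith
  hence "C * (Ln ys - Ln (anc ys)) \<ge> C * (1 - ln 2 - ln eps - ln (lam / dl) - e / eps)" using C0 by (rule mult_left_mono)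
  ultimately have "B * Gn (anc ys) + C * (Ln ys - Ln (anc ys)) \<ge>
      (- B * (dl + 1 + dl * ln M) + C * (1 - ln 2 - ln eps - ln (lam / dl))) - (B * ln M / dl + C / eps) * e"
    by (simp add: algebra_simps)
  hence "Z ys * (B * Gn (anc ys) + C * (Ln ys - Ln (anc ys))) \<ge>
      Z ys * ((- B * (dl + 1 + dl * ln M) + C * (1 - ln 2 - ln eps - ln (lam / dl))) - (B * ln M / dl + C / eps) * e)"
    using Z by (intro mult_left_mono) auto
  moreover have "Z ys * ((- B * (dl + 1 + dl * ln M) + C * (1 - ln 2 - ln eps - ln (lam / dl))) - (B * ln M / dl + C / eps) * e)
     = Z ys * (- B * (dl + 1 + dl * ln M) + C * (1 - ln 2 - ln eps - ln (lam / dl))) - (B * ln M / dl + C / eps) * (Z ys * e)"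
    by (simp add: right_diff_distrib)
  ultimately show ?thesis unfolding Phi_def Ze by linarith
qed

lemma Phi_root: "Phi B C [] = - B * real M * ln M"
proof -
  have "anc [] = []" by (simp add: anc_def)
  moreover have "Gn [] = - ln M"
  proof -
    have "Gn [] = (\<Sum>w\<in>{1..M}. (1 / real M) * ln (1 / real M))" by (simp add: Gn_def pp_def)
    also have "\<dots> = ln (1 / real M)" using M2 by simp
    finally show ?thesis using M2 by (simp add: ln_div)
  qed
  ultimately show ?thesis by (simp add: Phi_def)
qed

end

lemma telescope_full:
  fixes F :: "'y::finite list \<Rightarrow> real"
  assumes SK: "\<And>ys. K \<le> length ys \<Longrightarrow> S ys"
  shows "(\<Sum>k\<le>K. \<Sum>ys\<in>{ys. length ys = k}. if alive S ys \<and> S ys then F ys else 0) =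
     F [] + (\<Sum>k\<le>K. \<Sum>ys\<in>{ys. length ys = k}. if alive S ys \<and> \<not> S ys then (\<Sum>y\<in>UNIV. F (ys @ [y])) - F ys else 0)"
proof -
  have z: "(\<Sum>ys\<in>{ys. length ys = Suc K}. if alive S ys then F ys else 0) = 0"
  proof (rule sum.neutral, rule ballI)
    fix ys :: "'y list" assume "ys \<in> {ys. length ys = Suc K}"
    hence "K < length ys" "length (take K ys) = K" by auto
    hence "\<not> alive S ys" using SK[of "take K ys"] by (auto simp: alive_def)
    thus "(if alive S ys then F ys else 0) = 0" by simp
  qed
  have "{..<Suc K} = {..K}" by auto
  thus ?thesis using telescope_level[where S=S and n="Suc K" and F=F] z by simp
qed

definition LS :: "('y::finite list \<Rightarrow> bool) \<Rightarrow> nat \<Rightarrow> ('y list \<Rightarrow> real) \<Rightarrow> real" where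
  "LS S K f = (\<Sum>k\<le>K. \<Sum>ys\<in>{ys. length ys = k}. if alive S ys \<and> S ys then f ys else 0)"
definition IS :: "('y::finite list \<Rightarrow> bool) \<Rightarrow> nat \<Rightarrow> ('y list \<Rightarrow> real) \<Rightarrow> real" where
  "IS S K f = (\<Sum>k\<le>K. \<Sum>ys\<in>{ys. length ys = k}. if alive S ys \<and> \<not> S ys then f ys else 0)"

lemma LS_mono: "(\<And>ys. f ys \<le> g ys) \<Longrightarrow> LS S K f \<le> LS S K g"
  unfolding LS_def by (intro sum_mono) auto
lemma IS_mono: "(\<And>ys. f ys \<le> g ys) \<Longrightarrow> IS S K f \<le> IS S K g"
  unfolding IS_def by (intro sum_mono) auto
lemma LS_lin: "LS S K (\<lambda>ys. a * f ys - b * g ys) = a * LS S K f - b * LS S K g"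
proof -
  have "\<And>ys P. (if P then a * f ys - b * g ys else 0) = a * (if P then f ys else 0) - b * (if P then g ys else 0)"
    by simp
  thus ?thesis unfolding LS_def by (simp add: sum_subtractf sum_distrib_left)
qed
lemma IS_cmult: "IS S K (\<lambda>ys. c * f ys) = c * IS S K f"
proof -
  have "\<And>ys P. (if P then c * f ys else 0) = c * (if P then f ys else 0)" by simp
  thus ?thesis unfolding IS_def by (simp add: sum_distrib_left)
qed
lemma IS_zero: "IS S K (\<lambda>ys. 0) = 0" unfolding IS_def by simp

context vtree2 begin

lemma tree_ineq:
  assumes SK: "\<And>ys. K \<le> length ys \<Longrightarrow> S ys"
    and KL: "\<And>x x'. (\<Sum>y\<in>UNIV. W x y * ln (W x y / W x' y)) \<le> B"
    and CAP: "\<And>P. P \<in> input_dists \<Longrightarrow> mutual_info P W \<le> C"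
    and B0: "0 \<le> B" and C0: "0 \<le> C" and eps: "0 < eps"
    and dec: "\<And>ys. dec ys \<in> {1..M}"
    and err: "LS S K (\<lambda>ys. Z ys - q (dec ys) ys) \<le> real M * eps"
  shows "C * ln (1 / eps) \<le> B * C * (IS S K Z / real M) - B * ln M + B * (dl + 1 + dl * ln M)
            + B * ln M * eps / dl + C * ln (2 * lam / dl)"
proof -
  define K0 where "K0 = - B * (dl + 1 + dl * ln M) + C * (1 - ln 2 - ln eps - ln (lam / dl))"
  define Kc where "Kc = B * ln M / dl + C / eps"
  have Mp: "0 < real M" using M2 by simp
  have lnM: "0 \<le> ln (real M)" using M2 by simp
  have Kc0: "0 \<le> Kc" unfolding Kc_def using B0 C0 eps dl_pos lnM by simp
  have tel: "LS S K (Phi B C) = Phi B C [] + IS S K (\<lambda>ys. (\<Sum>y\<in>UNIV. Phi B C (ys @ [y])) - Phi B C ys)"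
    unfolding LS_def IS_def by (rule telescope_full[OF SK])
  have telZ: "LS S K Z = Z [] + IS S K (\<lambda>ys. (\<Sum>y\<in>UNIV. Z (ys @ [y])) - Z ys)"
    unfolding LS_def IS_def by (rule telescope_full[OF SK])
  hence LZ: "LS S K Z = real M" by (simp add: Z_children IS_zero)
  have up: "LS S K (Phi B C) \<le> - B * real M * ln M + B * C * IS S K Z"
    using tel Phi_root[of B C] IS_mono[of "\<lambda>ys. (\<Sum>y\<in>UNIV. Phi B C (ys @ [y])) - Phi B C ys" "\<lambda>ys. B * C * Z ys" S K]
      Phi_drift[OF KL CAP B0 C0] by (simp add: IS_cmult)
  have "LS S K (\<lambda>ys. K0 * Z ys - Kc * (Z ys - q (dec ys) ys)) \<le> LS S K (Phi B C)"
    using Phi_leaf[OF B0 C0 eps dec] by (intro LS_mono) (simp add: K0_def Kc_def mult.commute)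
  hence "K0 * real M - Kc * LS S K (\<lambda>ys. Z ys - q (dec ys) ys) \<le> LS S K (Phi B C)"
    by (simp add: LS_lin LZ)
  moreover have "Kc * LS S K (\<lambda>ys. Z ys - q (dec ys) ys) \<le> Kc * (real M * eps)"
    using err Kc0 by (rule mult_left_mono)
  ultimately have "K0 * real M - Kc * (real M * eps) \<le> - B * real M * ln M + B * C * IS S K Z"
    using up by linarith
  hence "real M * (K0 - Kc * eps) \<le> real M * (- B * ln M + B * C * (IS S K Z / real M))"
    using Mp by (simp add: algebra_simps)
  hence main: "K0 - Kc * eps \<le> - B * ln M + B * C * (IS S K Z / real M)"
    using Mp by simp
  have "Kc * eps = B * ln M * eps / dl + C" using eps by (simp add: Kc_def algebra_simps)
  moreover have "ln (2 * lam / dl) = ln 2 + ln (lam / dl)" using lam1 dl_pos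
    by (simp add: ln_mult_pos[symmetric] mult.assoc)
  moreover have "ln (1 / eps) = - ln eps" using eps by (simp add: ln_div)
  ultimately show ?thesis using main unfolding K0_def by (simp add: algebra_simps)
qed

end

definition SK :: "('y list \<Rightarrow> bool) \<Rightarrow> nat \<Rightarrow> 'y list \<Rightarrow> bool" where
  "SK stop K ys = (stop ys \<or> K \<le> length ys)"

context vtree begin

lemma stops_at_alive: "stops_at stop ys \<longleftrightarrow> alive stop ys \<and> stop ys"
  by (auto simp: stops_at_def alive_def)

lemma sp_eq: "stop_prob W M enc stop n = (\<Sum>ys\<in>{ys. length ys = n}. if stops_at stop ys then Z ys else 0) / real M"
proof -
  have "stop_prob W M enc stop n = (\<Sum>ys\<in>{ys. length ys = n}. \<Sum>w\<in>{1..M}. if stops_at stop ys then q w ys / real M else 0)"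
    unfolding stop_prob_def q_def by (rule sum.swap)
  also have "\<dots> = (\<Sum>ys\<in>{ys. length ys = n}. (if stops_at stop ys then Z ys else 0) / real M)"
    by (rule sum.cong[OF refl]) (simp add: Z_def sum_divide_distrib)
  finally show ?thesis by (simp add: sum_divide_distrib)
qed

lemma err_eq: assumes dec: "\<And>ys. dec ys \<in> {1..M}"
  shows "err_prob_at W M enc dec stop n =
    (\<Sum>ys\<in>{ys. length ys = n}. if stops_at stop ys then Z ys - q (dec ys) ys else 0) / real M"
proof -
  have inner: "(\<Sum>w\<in>{1..M}. if dec ys \<noteq> w then q w ys else 0) = Z ys - q (dec ys) ys" for ys
  proof -
    have "(\<Sum>w\<in>{1..M}. if dec ys \<noteq> w then q w ys else 0) =
          (\<Sum>w\<in>{1..M}. q w ys - (if dec ys = w then q w ys else 0))"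
      by (rule sum.cong) auto
    also have "\<dots> = Z ys - q (dec ys) ys" using dec[of ys] by (simp add: sum_subtractf Z_def)
    finally show ?thesis .
  qed
  have "err_prob_at W M enc dec stop n = (\<Sum>ys\<in>{ys. length ys = n}. \<Sum>w\<in>{1..M}.
      if stops_at stop ys \<and> dec ys \<noteq> w then q w ys / real M else 0)"
    unfolding err_prob_at_def q_def by (rule sum.swap)
  also have "\<dots> = (\<Sum>ys\<in>{ys. length ys = n}. (if stops_at stop ys then Z ys - q (dec ys) ys else 0) / real M)"
  proof (rule sum.cong[OF refl])
    fix ys
    show "(\<Sum>w\<in>{1..M}. if stops_at stop ys \<and> dec ys \<noteq> w then q w ys / real M else 0) =
      (if stops_at stop ys then Z ys - q (dec ys) ys else 0) / real M"
    proof (cases "stops_at stop ys")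
      case True
      have "(\<Sum>w\<in>{1..M}. if dec ys \<noteq> w then q w ys / real M else 0) = (\<Sum>w\<in>{1..M}. if dec ys \<noteq> w then q w ys else 0) / real M"
      proof -
        have "(\<Sum>w\<in>{1..M}. if dec ys \<noteq> w then q w ys / real M else 0) = (\<Sum>w\<in>{1..M}. (if dec ys \<noteq> w then q w ys else 0) / real M)"
          by (rule sum.cong) auto
        thus ?thesis by (simp add: sum_divide_distrib)
      qed
      thus ?thesis using True inner by simp
    qed simp
  qed
  finally show ?thesis by (simp add: sum_divide_distrib)
qed

lemma sp_nonneg: "0 \<le> stop_prob W M enc stop n"
  by (simp add: sp_eq Z_nonneg sum_nonneg)

lemma err_nonneg_le: assumes dec: "\<And>ys. dec ys \<in> {1..M}"
  shows "0 \<le> err_prob_at W M enc dec stop n" "err_prob_at W M enc dec stop n \<le> stop_prob W M enc stop n"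
proof -
  have a: "0 \<le> Z ys - q (dec ys) ys" for ys using q_le_Z[OF dec] by simp
  have b: "Z ys - q (dec ys) ys \<le> Z ys" for ys using q_nonneg by simp
  show "0 \<le> err_prob_at W M enc dec stop n" unfolding err_eq[OF dec]
    by (intro divide_nonneg_nonneg sum_nonneg) (auto simp: q_le_Z[OF dec])
  show "err_prob_at W M enc dec stop n \<le> stop_prob W M enc stop n" unfolding err_eq[OF dec] sp_eq
    by (intro divide_right_mono sum_mono) (auto simp: b)
qed

lemma alive_mass: "(\<Sum>ys\<in>{ys. length ys = n}. if alive stop ys then Z ys else 0) =
   real M - real M * (\<Sum>k<n. stop_prob W M enc stop k)"
proof -
  have M0: "real M \<noteq> 0" using M2 by simp
  have "(\<Sum>ys\<in>{ys. length ys = n}. if alive stop ys then Z ys else 0) =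
      Z [] + (\<Sum>k<n. \<Sum>ys\<in>{ys. length ys = k}. if alive stop ys \<and> \<not> stop ys then (\<Sum>y\<in>UNIV. Z (ys @ [y])) - Z ys else 0)
          - (\<Sum>k<n. \<Sum>ys\<in>{ys. length ys = k}. if alive stop ys \<and> stop ys then Z ys else 0)"
    by (rule telescope_level)
  also have "(\<Sum>k<n. \<Sum>ys\<in>{ys. length ys = k}. if alive stop ys \<and> \<not> stop ys then (\<Sum>y\<in>UNIV. Z (ys @ [y])) - Z ys else 0) = 0"
    by (intro sum.neutral ballI) (simp add: Z_children)
  also have "Z [] + 0 - (\<Sum>k<n. \<Sum>ys\<in>{ys. length ys = k}. if alive stop ys \<and> stop ys then Z ys else 0)
     = real M - (\<Sum>k<n. real M * stop_prob W M enc stop k)"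
    using M0 by (simp add: sp_eq stops_at_alive)
  finally show ?thesis by (simp add: sum_distrib_left)
qed

lemma alive_nostop_mass: "(\<Sum>ys\<in>{ys. length ys = n}. if alive stop ys \<and> \<not> stop ys then Z ys else 0) =
   real M * (1 - (\<Sum>k<Suc n. stop_prob W M enc stop k))"
proof -
  have M0: "real M \<noteq> 0" using M2 by simp
  have "(\<Sum>ys\<in>{ys. length ys = n}. if alive stop ys \<and> \<not> stop ys then Z ys else 0) =
    (\<Sum>ys\<in>{ys. length ys = n}. if alive stop ys then Z ys else 0) - (\<Sum>ys\<in>{ys. length ys = n}. if stops_at stop ys then Z ys else 0)"
    by (simp add: sum_subtractf[symmetric] stops_at_alive) (rule sum.cong, auto)
  also have "\<dots> = real M - real M * (\<Sum>k<n. stop_prob W M enc stop k) - real M * stop_prob W M enc stop n"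
    using M0 by (simp add: alive_mass sp_eq)
  finally show ?thesis by (simp add: algebra_simps)
qed

lemma alive_SK: "length ys \<le> K \<Longrightarrow> alive (SK stop K) ys \<longleftrightarrow> alive stop ys"
  by (auto simp: alive_def SK_def)

lemma IS_SK: "IS (SK stop K) K Z = real M * (\<Sum>k<K. 1 - (\<Sum>j<Suc k. stop_prob W M enc stop j))"
proof -
  have "IS (SK stop K) K Z = (\<Sum>k\<in>insert K {..<K}. \<Sum>ys\<in>{ys. length ys = k}.
      if alive (SK stop K) ys \<and> \<not> SK stop K ys then Z ys else 0)"
    unfolding IS_def by (simp add: lessThan_Suc_atMost[symmetric] lessThan_Suc)
  also have "\<dots> = (\<Sum>k<K. \<Sum>ys\<in>{ys. length ys = k}. if alive stop ys \<and> \<not> stop ys then Z ys else 0)"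
  proof -
    have "(\<Sum>ys\<in>{ys. length ys = K}. if alive (SK stop K) ys \<and> \<not> SK stop K ys then Z ys else 0) = 0"
      by (rule sum.neutral) (auto simp: SK_def)
    moreover have "(\<Sum>ys\<in>{ys. length ys = k}. if alive (SK stop K) ys \<and> \<not> SK stop K ys then Z ys else 0) =
        (\<Sum>ys\<in>{ys. length ys = k}. if alive stop ys \<and> \<not> stop ys then Z ys else 0)" if "k < K" for k
      using that by (intro sum.cong refl) (auto simp: alive_SK SK_def)
    ultimately show ?thesis by simp
  qed
  also have "\<dots> = real M * (\<Sum>k<K. 1 - (\<Sum>j<Suc k. stop_prob W M enc stop j))"
    by (simp add: alive_nostop_mass sum_distrib_left)
  finally show ?thesis .
qed

lemma LS_SK_err: assumes dec: "\<And>ys. dec ys \<in> {1..M}"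
  shows "LS (SK stop K) K (\<lambda>ys. Z ys - q (dec ys) ys) \<le>
    real M * (\<Sum>k\<le>K. err_prob_at W M enc dec stop k) + real M * (1 - (\<Sum>j<Suc K. stop_prob W M enc stop j))"
proof -
  have M0: "real M \<noteq> 0" using M2 by simp
  have lev: "(\<Sum>ys\<in>{ys. length ys = k}. if alive (SK stop K) ys \<and> SK stop K ys then Z ys - q (dec ys) ys else 0)
     \<le> real M * err_prob_at W M enc dec stop k + (if k = K then real M * (1 - (\<Sum>j<Suc K. stop_prob W M enc stop j)) else 0)"
    if k: "k \<le> K" for k
  proof -
    have "(\<Sum>ys\<in>{ys. length ys = k}. if alive (SK stop K) ys \<and> SK stop K ys then Z ys - q (dec ys) ys else 0)
       \<le> (\<Sum>ys\<in>{ys. length ys = k}. (if stops_at stop ys then Z ys - q (dec ys) ys else 0) +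
            (if k = K then (if alive stop ys \<and> \<not> stop ys then Z ys else 0) else 0))"
    proof (rule sum_mono)
      fix ys :: "'y list" assume "ys \<in> {ys. length ys = k}"
      hence l: "length ys = k" by simp
      have a: "0 \<le> Z ys - q (dec ys) ys" using q_le_Z[OF dec] by simp
      have b: "Z ys - q (dec ys) ys \<le> Z ys" using q_nonneg by simp
      show "(if alive (SK stop K) ys \<and> SK stop K ys then Z ys - q (dec ys) ys else 0)
        \<le> (if stops_at stop ys then Z ys - q (dec ys) ys else 0) +
            (if k = K then (if alive stop ys \<and> \<not> stop ys then Z ys else 0) else 0)"
        using l k a b by (auto simp: alive_SK SK_def stops_at_alive Z_nonneg)
    qed
    also have "\<dots> = real M * err_prob_at W M enc dec stop k + (if k = K then real M * (1 - (\<Sum>j<Suc K. stop_prob W M enc stop j)) else 0)"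
      using M0 by (simp add: sum.distrib err_eq[OF dec] alive_nostop_mass)
    finally show ?thesis .
  qed
  have "LS (SK stop K) K (\<lambda>ys. Z ys - q (dec ys) ys) \<le>
      (\<Sum>k\<le>K. real M * err_prob_at W M enc dec stop k + (if k = K then real M * (1 - (\<Sum>j<Suc K. stop_prob W M enc stop j)) else 0))"
    unfolding LS_def by (rule sum_mono) (rule lev, simp)
  also have "\<dots> = real M * (\<Sum>k\<le>K. err_prob_at W M enc dec stop k) + real M * (1 - (\<Sum>j<Suc K. stop_prob W M enc stop j))"
    by (simp add: sum.distrib sum_distrib_left)
  finally show ?thesis .
qed

end

lemma tails_sum_eq:
  fixes sp :: "nat \<Rightarrow> real"
  shows "(\<Sum>k<K. 1 - (\<Sum>j<Suc k. sp j)) = real K - (\<Sum>j<K. (real K - real j) * sp j)"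
proof (induction K)
  case 0 thus ?case by simp
next
  case (Suc K)
  have "(\<Sum>j<Suc K. (real (Suc K) - real j) * sp j) = (\<Sum>j<Suc K. (real K - real j) * sp j) + (\<Sum>j<Suc K. sp j)"
    by (simp add: sum.distrib[symmetric] algebra_simps)
  also have "(\<Sum>j<Suc K. (real K - real j) * sp j) = (\<Sum>j<K. (real K - real j) * sp j)" by simp
  finally show ?case using Suc.IH by simp
qed

lemma tails_bound:
  fixes sp :: "nat \<Rightarrow> real"
  assumes nn: "\<And>n. 0 \<le> sp n" and s1: "sp sums 1" and sm: "summable (\<lambda>n. real n * sp n)"
  shows "real K - (\<Sum>j<K. (real K - real j) * sp j) \<le> (\<Sum>n. real n * sp n)"
proof -
  have e: "(\<lambda>n. real K * sp n - (if n < K then (real K - real n) * sp n else 0)) sums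
           (real K * 1 - (\<Sum>j<K. (real K - real j) * sp j))"
  proof (rule sums_diff)
    show "(\<lambda>n. real K * sp n) sums (real K * 1)" using s1 by (rule sums_mult)
    show "(\<lambda>n. if n < K then (real K - real n) * sp n else 0) sums (\<Sum>j<K. (real K - real j) * sp j)"
      using sums_If_finite_set[of "{..<K}" "\<lambda>n. (real K - real n) * sp n"] by simp
  qed
  have eq: "real K * sp n - (if n < K then (real K - real n) * sp n else 0) = real (min n K) * sp n" for n
    by (cases "n < K") (auto simp: algebra_simps min_def)
  have "real K - (\<Sum>j<K. (real K - real j) * sp j) = (\<Sum>n. real (min n K) * sp n)"
    using e unfolding eq by (simp add: sums_iff)
  also have "\<dots> \<le> (\<Sum>n. real n * sp n)"
    using e sm nn unfolding eq by (intro suminf_le) (auto simp: sums_iff intro: mult_right_mono)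
  finally show ?thesis .
qed

lemma code_ineq:
  fixes W :: "'x::finite \<Rightarrow> 'y::finite \<Rightarrow> real" and enc :: "nat \<Rightarrow> 'y list \<Rightarrow> 'x"
  assumes stoch: "stoch_matrix W" and ratio: "\<And>x x' y. W x y \<le> lam * W x' y" and lam1: "1 \<le> lam"
    and KL: "\<And>x x'. (\<Sum>y\<in>UNIV. W x y * ln (W x y / W x' y)) \<le> B"
    and CAP: "\<And>P. P \<in> input_dists \<Longrightarrow> mutual_info P W \<le> C"
    and B0: "0 \<le> B" and C0: "0 \<le> C"
    and code: "is_VLF_code W M N enc dec stop" and M2: "2 \<le> M"
    and dl: "0 < dl" "dl \<le> 1/2" and u: "0 < u" and pe: "err_prob W M enc dec stop \<le> u"
  shows "C * ln (1 / (2 * u)) \<le> B * C * N - B * ln M + B * (dl + 1 + dl * ln M)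
            + B * ln M * (2 * u) / dl + C * ln (2 * lam / dl)"
proof -
  interpret vtree2 W enc M lam dl
    by unfold_locales (use stoch ratio M2 dl lam1 in auto)
  let ?sp = "stop_prob W M enc stop"
  let ?er = "err_prob_at W M enc dec stop"
  have dec: "\<And>ys. dec ys \<in> {1..M}" using code by (simp add: is_VLF_code_def)
  have s1: "?sp sums 1" and smn: "summable (\<lambda>n. real n * ?sp n)" and EN: "(\<Sum>n. real n * ?sp n) \<le> N"
    using code by (auto simp: is_VLF_code_def)
  have ersum: "summable ?er"
    by (rule summable_comparison_test'[OF sums_summable[OF s1], of 0])
       (use err_nonneg_le[OF dec] in auto)
  obtain K where K: "1 - (\<Sum>j<Suc K. ?sp j) \<le> u"
  proof -
    have "(\<lambda>n. \<Sum>j<n. ?sp j) \<longlonglongrightarrow> 1" using s1 by (simp add: sums_def)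
    hence "\<forall>\<^sub>F n in sequentially. dist (\<Sum>j<n. ?sp j) 1 < u" using u by (rule tendstoD)
    then obtain N0 where "\<forall>n\<ge>N0. dist (\<Sum>j<n. ?sp j) 1 < u" by (auto simp: eventually_sequentially)
    hence "dist (\<Sum>j<Suc N0. ?sp j) 1 < u" by (metis le_SucI order_refl)
    hence "1 - (\<Sum>j<Suc N0. ?sp j) \<le> u" by (simp add: dist_real_def)
    thus ?thesis by (rule that)
  qed
  have SK: "\<And>ys. K \<le> length ys \<Longrightarrow> SK stop K ys" by (simp add: SK_def)
  have er_le: "(\<Sum>k\<le>K. ?er k) \<le> err_prob W M enc dec stop"
    unfolding err_prob_def using ersum err_nonneg_le(1)[OF dec]
    by (intro sum_le_suminf) auto
  have err: "LS (SK stop K) K (\<lambda>ys. Z ys - q (dec ys) ys) \<le> real M * (2 * u)"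
  proof -
    have "LS (SK stop K) K (\<lambda>ys. Z ys - q (dec ys) ys) \<le> real M * (\<Sum>k\<le>K. ?er k) + real M * (1 - (\<Sum>j<Suc K. ?sp j))"
      by (rule LS_SK_err[OF dec])
    also have "\<dots> \<le> real M * u + real M * u"
      using er_le pe K by (intro add_mono mult_left_mono) auto
    finally show ?thesis by (simp add: algebra_simps)
  qed
  have main: "C * ln (1 / (2 * u)) \<le> B * C * (IS (SK stop K) K Z / real M) - B * ln M + B * (dl + 1 + dl * ln M)
            + B * ln M * (2 * u) / dl + C * ln (2 * lam / dl)"
  proof (rule tree_ineq[OF SK KL CAP B0 C0 _ dec err])
    show "0 < 2 * u" using u by linarith
  qed
  have "IS (SK stop K) K Z / real M = (\<Sum>k<K. 1 - (\<Sum>j<Suc k. ?sp j))"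
    using M2 by (simp add: IS_SK)
  also have "\<dots> \<le> N"
    using tails_sum_eq[where K=K and sp="?sp"] tails_bound[OF sp_nonneg s1 smn, of K] EN by linarith
  finally have "B * C * (IS (SK stop K) K Z / real M) \<le> B * C * N"
    using B0 C0 by (intro mult_left_mono) auto
  thus ?thesis using main by linarith
qed

lemma err_prob_nonneg:
  fixes W :: "'x::finite \<Rightarrow> 'y::finite \<Rightarrow> real" and enc :: "nat \<Rightarrow> 'y list \<Rightarrow> 'x"
  assumes stoch: "stoch_matrix W" and ratio: "\<And>x x' y. W x y \<le> lam * W x' y"
    and code: "is_VLF_code W M N enc dec stop" and M2: "2 \<le> M"
  shows "0 \<le> err_prob W M enc dec stop"
proof -
  interpret vtree W enc M lam
    by unfold_locales (use stoch ratio M2 in auto)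
  have dec: "\<And>ys. dec ys \<in> {1..M}" using code by (simp add: is_VLF_code_def)
  have s1: "stop_prob W M enc stop sums 1" using code by (simp add: is_VLF_code_def)
  have ersum: "summable (err_prob_at W M enc dec stop)"
    by (rule summable_comparison_test'[OF sums_summable[OF s1], of 0])
       (use err_nonneg_le[OF dec] in auto)
  show ?thesis unfolding err_prob_def using ersum err_nonneg_le(1)[OF dec]
    by (intro suminf_nonneg) auto
qed

lemma exp_lower4: "0 \<le> y \<Longrightarrow> (y / 4) ^ 4 \<le> exp (y::real)"
proof -
  assume y: "0 \<le> y"
  have "y / 4 \<le> exp (y / 4)" using exp_ge_add_one_self[of "y/4"] by linarith
  hence "(y / 4) ^ 4 \<le> exp (y / 4) ^ 4" using y by (intro power_mono) auto
  also have "exp (y / 4) ^ 4 = exp (real 4 * (y / 4))" by (rule exp_of_nat_mult[symmetric])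
  finally show ?thesis by simp
qed

lemma final_arith:
  fixes B C E r Nr L lam u :: real
  assumes C: "0 < C" and B: "0 \<le> B" and E: "0 < E" and r: "0 < r" "r \<le> 1/2" and Nr: "1 \<le> Nr"
    and s1: "1 \<le> r * sqrt Nr" and lam: "1 \<le> lam"
    and L: "Nr * (C - r) \<le> L"
    and u: "u = exp (- E * (Nr * r))"
    and sb: "256 / (E^4 * (r * sqrt Nr)) \<le> 1/4"
    and ineq: "C * ln (1 / (2 * u)) \<le> B * C * Nr - B * L + B * (r^2 + 1 + r^2 * L) + B * L * (2 * u) / r^2
                 + C * ln (2 * lam / r^2)"
  shows "C * E - B \<le> B * C * r + (512 * B * C / E^4 + 2 * B + C * ln 2 + C * ln (2 * lam) + 2 * C) / (r * sqrt Nr)"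
proof -
  define X where "X = Nr * r"
  define s where "s = r * sqrt Nr"
  define eta where "eta = r^2 + 2 * u / r^2"
  have up: "0 < u" by (simp add: u)
  have Xp: "0 < X" using Nr r by (simp add: X_def)
  have sq: "1 \<le> sqrt Nr" using Nr by simp
  have s2: "s^2 = Nr * r^2" using Nr by (simp add: s_def power_mult_distrib)
  have Xs: "X = sqrt Nr * s" using Nr by (simp add: X_def s_def)
  have sX: "s \<le> X" using Xs s1 sq unfolding s_def by (metis mult_le_cancel_right1 mult.commute order.strict_trans1 zero_less_one order_less_le)
  have sp: "1 \<le> s" using s1 by (simp add: s_def)
  have eta0: "0 \<le> eta" using up r by (simp add: eta_def)
  have uX: "u \<le> 256 / (E * X)^4"
  proof -
    have "((E * X) / 4) ^ 4 \<le> exp (E * X)" using E Xp by (intro exp_lower4) simp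
    moreover have "u = 1 / exp (E * X)" by (simp add: u X_def exp_minus field_simps)
    moreover have "0 < ((E * X) / 4) ^ 4" using E Xp by simp
    ultimately have "u \<le> 1 / ((E * X) / 4) ^ 4" by (simp add: frac_le)
    thus ?thesis by (simp add: power_divide)
  qed
  have X4: "X^4 * r^3 = (s^2)^3 * X" unfolding s2 X_def by (simp add: algebra_simps power2_eq_square power3_eq_cube power4_eq_xxxx)
  have s6: "1 \<le> (s^2)^3" using sp by simp
  have sX4: "s \<le> X^4 * r^3"
  proof -
    have "X \<le> (s^2)^3 * X" using s6 Xp by simp
    thus ?thesis using X4 sX by linarith
  qed
  have ur: "u / r^3 \<le> 256 / (E^4 * s)"
  proof -
    have "u / r^3 \<le> (256 / (E * X)^4) / r^3" using uX r by (intro divide_right_mono) auto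
    also have "\<dots> = 256 / (E^4 * (X^4 * r^3))" by (simp add: power_mult_distrib)
    also have "\<dots> \<le> 256 / (E^4 * s)" using E sX4 sp r by (intro divide_left_mono mult_left_mono mult_pos_pos) auto
    finally show ?thesis .
  qed
  have eta1: "eta \<le> 1"
  proof -
    have a: "u / r^3 \<le> 1/4" using ur sb unfolding s_def by linarith
    have "2 * u / r^2 = 2 * r * (u / r^3)" using r by (simp add: field_simps power2_eq_square power3_eq_cube)
    also have "\<dots> \<le> 2 * (1/2) * (1/4)" using a r up by (intro mult_mono) auto
    finally have b: "2 * u / r^2 \<le> 1/4" by simp
    have "r^2 \<le> (1/2)^2" using r by (intro power_mono) auto
    hence "r^2 \<le> 1/4" by (simp add: power2_eq_square)
    thus ?thesis using b unfolding eta_def by linarith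
  qed
  have l1: "ln (1 / (2 * u)) = E * X - ln 2"
    using up by (simp add: ln_div ln_mult_pos u X_def)
  have l2: "- B * L + B * (r^2 * L) + B * L * (2 * u) / r^2 = - B * L * (1 - eta)"
    using r by (simp add: eta_def field_simps)
  have l3: "- B * L * (1 - eta) \<le> - B * (Nr * (C - r)) * (1 - eta)"
  proof -
    have "0 \<le> B * (1 - eta)" using B eta1 by simp
    hence "B * (1 - eta) * (Nr * (C - r)) \<le> B * (1 - eta) * L" using mult_left_mono[OF L] by blast
    thus ?thesis by (simp add: algebra_simps)
  qed
  have l4: "- B * (Nr * (C - r)) * (1 - eta) \<le> - B * C * Nr + B * C * Nr * eta + B * X"
  proof -
    have "- B * (Nr * (C - r)) * (1 - eta) = - B * C * Nr + B * C * Nr * eta + B * X - B * X * eta"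
      by (simp add: X_def algebra_simps)
    moreover have "0 \<le> B * X * eta" using B Xp eta0 by simp
    ultimately show ?thesis by linarith
  qed
  have l5: "ln (2 * lam / r^2) \<le> ln (2 * lam) + 2 / r"
  proof -
    have "ln (2 * lam / r^2) = ln (2 * lam) + 2 * ln (1 / r)"
      using r lam by (simp add: ln_div ln_mult_pos ln_realpow)
    moreover have "ln (1 / r) \<le> 1 / r" using r ln_le_minus_one[of "1/r"] by simp
    ultimately show ?thesis by simp
  qed
  have main: "C * (E * X) \<le> B * C * Nr * eta + B * X + B * (r^2 + 1) + C * ln 2 + C * ln (2 * lam) + 2 * C / r"
  proof -
    have "C * (E * X - ln 2) \<le> B * C * Nr - B * L + B * (r^2 + 1 + r^2 * L) + B * L * (2 * u) / r^2 + C * ln (2 * lam / r^2)"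
      using ineq l1 by simp
    also have "\<dots> = B * C * Nr + B * (r^2 + 1) + (- B * L + B * (r^2 * L) + B * L * (2 * u) / r^2) + C * ln (2 * lam / r^2)"
      by (simp add: algebra_simps)
    also have "\<dots> \<le> B * C * Nr + B * (r^2 + 1) + (- B * C * Nr + B * C * Nr * eta + B * X) + C * (ln (2 * lam) + 2 / r)"
    proof -
      have "- B * L + B * (r^2 * L) + B * L * (2 * u) / r^2 \<le> - B * C * Nr + B * C * Nr * eta + B * X"
        using l2 l3 l4 by linarith
      moreover have "C * ln (2 * lam / r^2) \<le> C * (ln (2 * lam) + 2 / r)"
        using l5 C by (intro mult_left_mono) auto
      ultimately show ?thesis by linarith
    qed
    finally show ?thesis by (simp add: algebra_simps)
  qed
  have d1: "B * C * Nr * eta / X = B * C * r + 2 * B * C * (u / r^3)"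
    using r Nr by (simp add: eta_def X_def field_simps power2_eq_square power3_eq_cube)
  have rX: "r * X = s^2" using s2 by (simp add: X_def algebra_simps power2_eq_square)
  have main2: "C * E \<le> B * C * Nr * eta / X + B + (B * (r^2 + 1) + C * ln 2 + C * ln (2 * lam)) / X + 2 * C / (r * X)"
  proof -
    have "C * E = C * (E * X) / X" using Xp by simp
    also have "\<dots> \<le> (B * C * Nr * eta + B * X + B * (r^2 + 1) + C * ln 2 + C * ln (2 * lam) + 2 * C / r) / X"
      using main Xp by (intro divide_right_mono) auto
    also have "\<dots> = B * C * Nr * eta / X + B + (B * (r^2 + 1) + C * ln 2 + C * ln (2 * lam)) / X + 2 * C / (r * X)"
      using Xp r by (simp add: field_simps)
    finally show ?thesis .
  qed
  have t1: "B * C * Nr * eta / X \<le> B * C * r + 512 * B * C / E^4 / s"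
  proof -
    have "2 * B * C * (u / r^3) \<le> 2 * B * C * (256 / (E^4 * s))" using ur B C by (intro mult_left_mono) auto
    thus ?thesis unfolding d1 by simp
  qed
  have t2: "(B * (r^2 + 1) + C * ln 2 + C * ln (2 * lam)) / X \<le> (2 * B + C * ln 2 + C * ln (2 * lam)) / s"
  proof -
    have r2: "r^2 \<le> 1" using r by (simp add: power_le_one)
    have n0: "0 \<le> B * (r^2 + 1) + C * ln 2 + C * ln (2 * lam)" using B C lam by simp
    have "B * (r^2 + 1) \<le> B * 2" using B r2 by (intro mult_left_mono) auto
    hence "B * (r^2 + 1) \<le> 2 * B" by simp
    hence "(B * (r^2 + 1) + C * ln 2 + C * ln (2 * lam)) / X \<le> (2 * B + C * ln 2 + C * ln (2 * lam)) / X"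
      using Xp by (intro divide_right_mono) auto
    also have "\<dots> \<le> (2 * B + C * ln 2 + C * ln (2 * lam)) / s"
    proof (rule divide_left_mono)
      show "0 \<le> 2 * B + C * ln 2 + C * ln (2 * lam)" using B C lam by simp
    qed (use sX sp in auto)
    finally show ?thesis .
  qed
  have t3: "2 * C / (r * X) \<le> 2 * C / s"
  proof -
    have "s \<le> s^2" using sp by (simp add: power2_eq_square)
    thus ?thesis unfolding rX using C sp by (intro divide_left_mono) auto
  qed
  have "C * E - B \<le> B * C * r + 512 * B * C / E^4 / s + (2 * B + C * ln 2 + C * ln (2 * lam)) / s + 2 * C / s"
    using main2 t1 t2 t3 by linarith
  thus ?thesis by (simp add: s_def add_divide_distrib)
qed

lemma channel_facts:
  fixes W :: "'x::finite \<Rightarrow> 'y::finite \<Rightarrow> real"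
  assumes stoch: "stoch_matrix W" and fin: "max_kl W < \<infinity>"
  shows "\<exists>B lam. max_kl W = ereal B \<and> 0 \<le> B \<and> 1 \<le> lam \<and> (\<forall>x x' y. W x y \<le> lam * W x' y)
     \<and> (\<forall>x x'. (\<Sum>y\<in>UNIV. W x y * ln (W x y / W x' y)) \<le> B)"
proof -
  have Wn: "\<And>x y. 0 \<le> W x y" using stoch by (simp add: stoch_matrix_def)
  define Ks where "Ks = {kl_div (W x) (W x') | x x'. True}"
  have Ks_eq: "Ks = (\<lambda>(x, x'). kl_div (W x) (W x')) ` UNIV" by (auto simp: Ks_def)
  have finK: "finite Ks" unfolding Ks_eq by simp
  have neK: "Ks \<noteq> {}" by (auto simp: Ks_def)
  have kle: "kl_div (W x) (W x') \<le> max_kl W" for x x'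
    unfolding max_kl_def Ks_def[symmetric] using finK by (intro Max_ge) (auto simp: Ks_def)
  have nin: "kl_div (W x) (W x') \<noteq> \<infinity>" for x x' using kle[of x x'] fin by auto
  have kd: "kl_div (W x) (W x') = ereal (\<Sum>y\<in>UNIV. W x y * ln (W x y / W x' y))"
    and cs: "\<not> (\<exists>y. 0 < W x y \<and> W x' y = 0)" for x x'
    using nin[of x x'] by (auto simp: kl_div_def split: if_splits)
  have "max_kl W \<in> Ks" unfolding max_kl_def Ks_def[symmetric] using finK neK by (rule Max_in)
  then obtain x0 x0' where m: "max_kl W = kl_div (W x0) (W x0')" by (auto simp: Ks_def)
  define B where "B = (\<Sum>y\<in>UNIV. W x0 y * ln (W x0 y / W x0' y))"
  have mB: "max_kl W = ereal B" using m kd by (simp add: B_def)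
  have KL: "(\<Sum>y\<in>UNIV. W x y * ln (W x y / W x' y)) \<le> B" for x x'
    using kle[of x x'] kd[of x x'] mB by simp
  have B0: "0 \<le> B"
  proof -
    have "(\<Sum>y\<in>UNIV. W x0 y * ln (W x0 y / W x0 y)) = 0" by (rule sum.neutral) auto
    thus ?thesis using KL[of x0 x0] by simp
  qed
  define lam where "lam = Max (insert 1 ((\<lambda>(x, x', y). W x y / W x' y) ` UNIV))"
  have lam1: "1 \<le> lam" unfolding lam_def by (intro Max_ge) auto
  have rat: "W x y \<le> lam * W x' y" for x x' y
  proof (cases "W x' y = 0")
    case True
    hence "W x y = 0" using cs[of x x'] Wn[of x y] by force
    thus ?thesis using True by simp
  next
    case False
    hence p: "0 < W x' y" using Wn[of x' y] by linarith
    have "W x y / W x' y \<le> lam" unfolding lam_def by (intro Max_ge) (auto intro!: image_eqI[where x="(x, x', y)"])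
    thus ?thesis using p by (simp add: pos_divide_le_eq mult.commute)
  qed
  show ?thesis using mB B0 lam1 rat KL by blast
qed

lemma mi_bounded:
  fixes W :: "'x::finite \<Rightarrow> 'y::finite \<Rightarrow> real"
  assumes stoch: "stoch_matrix W" and P: "P \<in> input_dists"
  shows "mutual_info P W \<le> real (card (UNIV :: 'x set))"
proof -
  have Wn: "\<And>x y. 0 \<le> W x y" and Ws: "\<And>x. (\<Sum>y\<in>UNIV. W x y) = 1" using stoch by (auto simp: stoch_matrix_def)
  have Pn: "\<And>x. 0 \<le> P x" using P by (simp add: input_dists_def)
  have tm: "P x * W x y * ln (W x y / out_dist P W y) \<le> P x * W x y * ln (1 / P x)" for x y
  proof (cases "P x * W x y = 0")
    case True thus ?thesis by (simp only: True mult_zero_left order_refl)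
  next
    case False
    hence pw: "0 < P x * W x y" using Pn[of x] Wn[of x y] by (simp add: less_le)
    hence px: "0 < P x" and wx: "0 < W x y" using Pn[of x] Wn[of x y] by (auto simp: zero_less_mult_iff)
    have "P x * W x y \<le> out_dist P W y" unfolding out_dist_def
      by (rule member_le_sum[of x UNIV "\<lambda>x. P x * W x y"]) (auto simp: Pn Wn)
    hence op: "0 < out_dist P W y" using pw by linarith
    have "W x y / out_dist P W y \<le> W x y / (P x * W x y)"
      using \<open>P x * W x y \<le> out_dist P W y\<close> pw wx by (intro divide_left_mono) auto
    also have "\<dots> = 1 / P x" using wx by simp
    finally have "ln (W x y / out_dist P W y) \<le> ln (1 / P x)" using op wx px by simp
    thus ?thesis using pw by (intro mult_left_mono) auto
  qed
  have px1: "P x * ln (1 / P x) \<le> 1" for x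
  proof (cases "P x = 0")
    case True thus ?thesis by simp
  next
    case False
    hence p: "0 < P x" using Pn[of x] by linarith
    have "ln (1 / P x) \<le> 1 / P x - 1" using p by (intro ln_le_minus_one) simp
    hence "P x * ln (1 / P x) \<le> P x * (1 / P x - 1)" using p by (intro mult_left_mono) auto
    also have "\<dots> = 1 - P x" using p by (simp add: right_diff_distrib)
    finally show ?thesis using p by linarith
  qed
  have "mutual_info P W \<le> (\<Sum>x\<in>UNIV. \<Sum>y\<in>UNIV. P x * W x y * ln (1 / P x))"
    unfolding mutual_info_def by (intro sum_mono tm)
  also have "\<dots> = (\<Sum>x\<in>UNIV. P x * ln (1 / P x))"
  proof (rule sum.cong[OF refl])
    fix x
    have "(\<Sum>y\<in>UNIV. P x * W x y * ln (1 / P x)) = P x * ln (1 / P x) * (\<Sum>y\<in>UNIV. W x y)"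
      by (simp add: sum_distrib_left sum_distrib_right mult.commute mult.left_commute)
    thus "(\<Sum>y\<in>UNIV. P x * W x y * ln (1 / P x)) = P x * ln (1 / P x)" by (simp add: Ws)
  qed
  also have "\<dots> \<le> (\<Sum>x\<in>(UNIV::'x set). 1)" by (intro sum_mono px1)
  finally show ?thesis by simp
qed

lemma cap_bound:
  fixes W :: "'x::finite \<Rightarrow> 'y::finite \<Rightarrow> real"
  assumes stoch: "stoch_matrix W" and P: "P \<in> input_dists"
  shows "mutual_info P W \<le> capacity W"
  unfolding capacity_def
proof (rule cSUP_upper[OF P])
  show "bdd_above ((\<lambda>P. mutual_info P W) ` input_dists)"
    using mi_bounded[OF stoch] by (intro bdd_aboveI[of _ "real (card (UNIV :: 'x set))"]) auto
qed

lemma pointwise_bound: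
  fixes W :: "'x::finite \<Rightarrow> 'y::finite \<Rightarrow> real" and enc :: "nat \<Rightarrow> 'y list \<Rightarrow> 'x"
  assumes stoch: "stoch_matrix W" and ratio: "\<And>x x' y. W x y \<le> lam * W x' y" and lam1: "1 \<le> lam"
    and KL: "\<And>x x'. (\<Sum>y\<in>UNIV. W x y * ln (W x y / W x' y)) \<le> B"
    and CAP: "\<And>P. P \<in> input_dists \<Longrightarrow> mutual_info P W \<le> C"
    and B0: "0 \<le> B" and C0: "0 < C" and E: "0 < E"
    and code: "is_VLF_code W M (real N) enc dec stop"
    and rate: "C - r \<le> ln (real M) / real N"
    and r: "0 < r" "r \<le> 1/2" "r < C" and N1: "1 \<le> N"
    and s1: "1 \<le> r * sqrt (real N)" and sb: "256 / (E^4 * (r * sqrt (real N))) \<le> 1/4"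
    and md: "ereal E < md_exponent (err_prob W M enc dec stop) (real N) r"
  shows "C * E - B \<le> B * C * r + (512 * B * C / E^4 + 2 * B + C * ln 2 + C * ln (2 * lam) + 2 * C) / (r * sqrt (real N))"
proof -
  have Np: "0 < real N" using N1 by simp
  have L: "real N * (C - r) \<le> ln (real M)" using rate Np by (simp add: pos_le_divide_eq mult.commute)
  have "0 < real N * (C - r)" using Np r by simp
  hence lnpos: "0 < ln (real M)" using L by linarith
  have M2: "2 \<le> M"
  proof (rule ccontr)
    assume "\<not> 2 \<le> M"
    hence "M = 0 \<or> M = 1" by auto
    thus False using lnpos by auto
  qed
  define u where "u = exp (- E * (real N * r))"
  have up: "0 < u" by (simp add: u_def)
  define Pe where "Pe = err_prob W M enc dec stop"
  have Pe0: "0 \<le> Pe" unfolding Pe_def by (rule err_prob_nonneg[OF stoch ratio code M2])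
  have Peu: "Pe \<le> u"
  proof (cases "Pe = 0")
    case True thus ?thesis using up by simp
  next
    case False
    hence Pp: "0 < Pe" using Pe0 by linarith
    have d: "0 < real N * r" using Np r by simp
    have "ereal E < ereal ((- ln Pe) / (real N * r))" using md False by (simp add: md_exponent_def Pe_def)
    hence "E < (- ln Pe) / (real N * r)" by simp
    hence "E * (real N * r) < - ln Pe" using pos_less_divide_eq[OF d] by blast
    hence "ln Pe < - E * (real N * r)" by simp
    hence "exp (ln Pe) < exp (- E * (real N * r))" by simp
    thus ?thesis using Pp by (simp add: u_def)
  qed
  have dl: "0 < r^2" "r^2 \<le> 1/2"
  proof -
    show "0 < r^2" using r by simp
    have "r^2 \<le> (1/2)^2" using r by (intro power_mono) auto
    thus "r^2 \<le> 1/2" by (simp add: power2_eq_square)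
  qed
  have ineq: "C * ln (1 / (2 * u)) \<le> B * C * real N - B * ln (real M) + B * (r^2 + 1 + r^2 * ln (real M))
            + B * ln (real M) * (2 * u) / r^2 + C * ln (2 * lam / r^2)"
    using code_ineq[OF stoch ratio lam1 KL CAP B0 _ code M2 dl up Peu[unfolded Pe_def]] C0 by simp
  show ?thesis
    by (rule final_arith[OF C0 B0 E r(1) r(2) _ s1 lam1 L u_def sb ineq]) (use N1 in simp)
qed

theorem proposition2:
  fixes W :: "'x::finite \<Rightarrow> 'y::finite \<Rightarrow> real" and \<rho> :: "nat \<Rightarrow> real"
  assumes "stoch_matrix W"
    and "capacity W > 0"
    and "\<exists>P\<in>input_dists. mutual_info P W = capacity W \<and> (\<forall>x. 0 < P x)"
    and "max_kl W < \<infinity>"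
    and "\<forall>N. 0 < \<rho> N"
    and "\<rho> \<longlonglongrightarrow> 0"
    and "filterlim (\<lambda>N. \<rho> N * sqrt (real N)) at_top sequentially"
  shows "E_star W \<rho> \<le> max_kl W / ereal (capacity W)"
proof -
  note stoch = assms(1) and rpos = assms(5) and r0 = assms(6) and rs = assms(7)
  define C where "C = capacity W"
  have C0: "0 < C" using assms(2) by (simp add: C_def)
  obtain B lam where mB: "max_kl W = ereal B" and B0: "0 \<le> B" and lam1: "1 \<le> lam"
    and ratio: "\<And>x x' y. W x y \<le> lam * W x' y"
    and KL: "\<And>x x'. (\<Sum>y\<in>UNIV. W x y * ln (W x y / W x' y)) \<le> B"
    using channel_facts[OF stoch assms(4)] by blast
  have CAP: "\<And>P. P \<in> input_dists \<Longrightarrow> mutual_info P W \<le> C"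
    unfolding C_def by (rule cap_bound[OF stoch])
  have ach: "E \<le> B / C" if Ach: "md_achievable W \<rho> E" for E
  proof (rule ccontr)
    assume "\<not> E \<le> B / C"
    hence EB: "B / C < E" by simp
    define E' where "E' = (E + B / C) / 2"
    have mid: "\<And>x y :: real. x < y \<Longrightarrow> x < (y + x) / 2 \<and> (y + x) / 2 < y" by (simp add: field_simps)
    have E'1a: "B / C < E'" unfolding E'_def using mid[OF EB] by blast
    have E'1b: "E' < E" unfolding E'_def using mid[OF EB] by blast
    note E'1 = E'1a E'1b
    have E'p: "0 < E'" using E'1 B0 C0 by (smt (verit) divide_nonneg_pos)
    define a where "a = C * E' - B"
    have ap: "0 < a" using E'1(1) C0 by (simp add: a_def pos_divide_less_eq mult.commute)
    obtain Ms :: "nat \<Rightarrow> nat" and encs :: "nat \<Rightarrow> nat \<Rightarrow> 'y list \<Rightarrow> 'x" and decs stops where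
      codes: "\<forall>N\<ge>1. is_VLF_code W (Ms N) (real N) (encs N) (decs N) (stops N) \<and>
                 ln (real (Ms N)) / real N \<ge> capacity W - \<rho> N"
      and lim: "ereal E \<le> liminf (\<lambda>N. md_exponent (err_prob W (Ms N) (encs N) (decs N) (stops N)) (real N) (\<rho> N))"
      using Ach unfolding md_achievable_def by blast
    define K where "K = 512 * B * C / E'^4 + 2 * B + C * ln 2 + C * ln (2 * lam) + 2 * C"
    define rr where "rr = (\<lambda>N. B * C * \<rho> N + K * inverse (\<rho> N * sqrt (real N)))"
    have rr0: "rr \<longlonglongrightarrow> 0"
    proof -
      have "(\<lambda>N. B * C * \<rho> N + K * inverse (\<rho> N * sqrt (real N))) \<longlonglongrightarrow> B * C * 0 + K * 0"
        by (intro tendsto_intros r0 tendsto_inverse_0_at_top rs)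
      thus ?thesis by (simp add: rr_def)
    qed
    have ev1: "\<forall>\<^sub>F N in sequentially. ereal E' < md_exponent (err_prob W (Ms N) (encs N) (decs N) (stops N)) (real N) (\<rho> N)"
    proof (rule less_LiminfD)
      have "ereal E' < ereal E" using E'1(2) by simp
      thus "ereal E' < liminf (\<lambda>N. md_exponent (err_prob W (Ms N) (encs N) (decs N) (stops N)) (real N) (\<rho> N))"
        using lim by (rule less_le_trans)
    qed
    have ev2: "\<forall>\<^sub>F N in sequentially. \<rho> N < min (1/2) C" using r0 C0 by (intro order_tendstoD(2)) auto
    have ev3: "\<forall>\<^sub>F N in sequentially. 1 \<le> \<rho> N * sqrt (real N)" using rs by (simp add: filterlim_at_top)
    have ev3b: "\<forall>\<^sub>F N in sequentially. 256 / E'^4 * 4 \<le> \<rho> N * sqrt (real N)" using rs by (simp add: filterlim_at_top)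
    have ev4: "\<forall>\<^sub>F N in sequentially. 1 \<le> N" by (rule eventually_ge_at_top)
    have ev5: "\<forall>\<^sub>F N in sequentially. rr N < a" using rr0 ap by (intro order_tendstoD(2)) auto
    have "\<forall>\<^sub>F N in sequentially. False"
      using ev1 ev2 ev3 ev3b ev4 ev5
    proof eventually_elim
      case (elim N)
      have rN: "0 < \<rho> N" "\<rho> N \<le> 1/2" "\<rho> N < C" using rpos elim(2) by auto
      have sp: "0 < \<rho> N * sqrt (real N)" using elim(3) by linarith
      have sb: "256 / (E'^4 * (\<rho> N * sqrt (real N))) \<le> 1/4"
      proof -
        have "256 / (E'^4 * (\<rho> N * sqrt (real N))) \<le> 256 / (E'^4 * (256 / E'^4 * 4))"
        proof (rule divide_left_mono)
          show "E'^4 * (256 / E'^4 * 4) \<le> E'^4 * (\<rho> N * sqrt (real N))"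
            using elim(4) E'p by (intro mult_left_mono) auto
          have "0 < E'^4 * (\<rho> N * sqrt (real N))" using E'p sp by simp
          moreover have "0 < E'^4 * (256 / E'^4 * 4)" using E'p by simp
          ultimately show "0 < E'^4 * (\<rho> N * sqrt (real N)) * (E'^4 * (256 / E'^4 * 4))" by simp
        qed simp
        also have "\<dots> = 1/4" using E'p by simp
        finally show ?thesis .
      qed
      have cN: "is_VLF_code W (Ms N) (real N) (encs N) (decs N) (stops N)"
        and rate: "C - \<rho> N \<le> ln (real (Ms N)) / real N" using codes elim(5) by (auto simp: C_def)
      have "C * E' - B \<le> B * C * \<rho> N + K / (\<rho> N * sqrt (real N))"
        unfolding K_def
        by (rule pointwise_bound[OF stoch ratio lam1 KL CAP B0 C0 E'p cN rate rN elim(5) elim(3) sb elim(1)])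
      hence "a \<le> rr N" by (simp add: a_def rr_def divide_inverse)
      thus False using elim(6) by linarith
    qed
    thus False by simp
  qed
  have "E_star W \<rho> \<le> ereal (B / C)"
    unfolding E_star_def by (rule Sup_least) (auto intro: ach)
  thus ?thesis using mB C0 by (simp add: C_def)
qed

end
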